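(* Let $\mathbf X\in\mathbb R^d$ be elliptical with positive definite covariance $\boldsymbol\Sigma=\mathbf V\boldsymbol\Lambda\mathbf V'$ and $\mathbf Y=\mathbf V'\mathbf X$. For $\alpha\in(0,1)$ and $i\in\{1,\dots,d\}$ let $\boldsymbol\Lambda_{i,\alpha}:=\mathrm{Cov}(\mathbf Y\mid Y_i\in\mathsf T^\alpha_{Y_i})$ (the conditioning event having positive probability). Then $\mathrm{Tr}(\boldsymbol\Lambda_{1,\alpha})\le\mathrm{Tr}(\boldsymbol\Lambda_{i,\alpha})\le\mathrm{Tr}(\boldsymbol\Lambda_{d,\alpha})$ for all $i\in\{1,\dots,d\}$; i.e. the preserved total variance is maximized by peeling $Y_d$ and minimized by peeling $Y_1$.
   Context: A random vector $\mathbf X\in\mathbb R^d$ belongs to the elliptical family with parameters $(\boldsymbol\mu,\boldsymbol\Sigma,\phi)$ if its characteristic function is $\mathbb E[e^{i\mathbf t'\mathbf X}]=e^{i\mathbf t'\boldsymbol\mu}\phi(\mathbf t'\boldsymbol\Sigma\mathbf t)$ for all $\mathbf t\in\mathbb R^d$, for some scalar function $\phi$; here $\mathbf X$ is assumed to have finite second moments and covariance matrix $\boldsymbol\Sigma$, positive definite. Spectral decomposition: $\boldsymbol\Sigma=\mathbf V\boldsymbol\Lambda\mathbf V'$ with $\mathbf V$ orthogonal (orthonormal eigenvectors as columns) and $\boldsymbol\Lambda=\mathrm{diag}(\lambda_1,\dots,\lambda_d)$, $\lambda_1\ge\cdots\ge\lambda_d>0$. For a real random variable $W$, $Q_W(p)=\inf\{x:\mathbb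 P(W\le x)\ge p\}$ and $\mathsf T^\alpha_W:=[Q_W(\alpha/2),Q_W(1-\alpha/2)]$. *)

theory Defs
  imports "HOL-Probability.Probability"
begin

definition cov_matrix :: "'a measure \<Rightarrow> ('a \<Rightarrow> real^'n) \<Rightarrow> real^'n^'n" where
  "cov_matrix M X = (\<chi> j k. \<integral>\<omega>. (X \<omega> $ j - (\<integral>\<eta>. X \<eta> $ j \<partial>M)) *
                              (X \<omega> $ k - (\<integral>\<eta>. X \<eta> $ k \<partial>M)) \<partial>M)"

definition elliptical :: "'a measure \<Rightarrow> ('a \<Rightarrow> real^'n) \<Rightarrow> real^'n \<Rightarrow> real^'n^'n \<Rightarrow> (real \<Rightarrow> complex) \<Rightarrow> bool" where
  "elliptical M X \<mu> \<Sigma> \<phi> \<longleftrightarrow>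
     (\<forall>t. (\<integral>\<omega>. cis (t \<bullet> X \<omega>) \<partial>M) = cis (t \<bullet> \<mu>) * \<phi> (t \<bullet> (\<Sigma> *v t)))"

definition quantile :: "'a measure \<Rightarrow> ('a \<Rightarrow> real) \<Rightarrow> real \<Rightarrow> real" where
  "quantile M W p = Inf {x. p \<le> measure M {\<omega> \<in> space M. W \<omega> \<le> x}}"

definition central_interval :: "'a measure \<Rightarrow> ('a \<Rightarrow> real) \<Rightarrow> real \<Rightarrow> real set" where
  "central_interval M W \<alpha> = {quantile M W (\<alpha>/2) .. quantile M W (1 - \<alpha>/2)}"

definition cond_mean :: "'a measure \<Rightarrow> 'a set \<Rightarrow> ('a \<Rightarrow> real) \<Rightarrow> real" where
  "cond_mean M A Z = (\<integral>\<omega>. indicator A \<omega> * Z \<omega> \<partial>M) / measure M A"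

definition cond_cov :: "'a measure \<Rightarrow> 'a set \<Rightarrow> ('a \<Rightarrow> real^'n) \<Rightarrow> real^'n^'n" where
  "cond_cov M A Y = (\<chi> j k. cond_mean M A (\<lambda>\<omega>. (Y \<omega> $ j - cond_mean M A (\<lambda>\<eta>. Y \<eta> $ j)) *
                                             (Y \<omega> $ k - cond_mean M A (\<lambda>\<eta>. Y \<eta> $ k))))"

end

theory Submission
  imports Defs
begin
lemma char_unique_finite:
  fixes M1 M2 :: "real measure"
  assumes f1: "finite_measure M1" and f2: "finite_measure M2"
    and s1: "sets M1 = sets borel" and s2: "sets M2 = sets borel"
    and ch: "char M1 = char M2"
  shows "M1 = M2"
proof -
  interpret F1: finite_measure M1 by fact
  interpret F2: finite_measure M2 by fact
  have c0: "char M 0 = complex_of_real (measure M (space M))" if "finite_measure M" for M :: "real measure"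
  proof -
    interpret finite_measure M by fact
    show ?thesis unfolding char_def by (simp add: scaleR_conv_of_real)
  qed
  define m where "m = measure M1 (space M1)"
  have m2: "m = measure M2 (space M2)"
    using c0[OF f1] c0[OF f2] ch m_def by (metis of_real_eq_iff) 
  show ?thesis
  proof (cases "m = 0")
    case True
    have z1: "emeasure M1 A = 0" if "A \<in> sets M1" for A
    proof -
      have "emeasure M1 A \<le> emeasure M1 (space M1)" using that by (intro emeasure_mono sets.sets_into_space) simp_all
      also have "\<dots> = 0" using True m_def F1.emeasure_eq_measure by simp
      finally show ?thesis by simp
    qed
    have z2: "emeasure M2 A = 0" if "A \<in> sets M2" for A
    proof -
      have "emeasure M2 A \<le> emeasure M2 (space M2)" using that by (intro emeasure_mono sets.sets_into_space) simp_all
      also have "\<dots> = 0" using True m2 F2.emeasure_eq_measure by simp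
      finally show ?thesis by simp
    qed
    show ?thesis by (rule measure_eqI) (use s1 s2 z1 z2 in auto)
  next
    case False
    then have mpos: "m > 0" using m_def by (simp add: order_less_le)
    define P1 where "P1 = density M1 (\<lambda>_. ennreal (1/m))"
    define P2 where "P2 = density M2 (\<lambda>_. ennreal (1/m))"
    have eP: "emeasure (density M (\<lambda>_. ennreal (1/m))) A = ennreal (1/m) * emeasure M A"
      if "A \<in> sets M" for M :: "real measure" and A
      using that by (simp add: emeasure_density nn_integral_cmult_indicator)
    have rd: "real_distribution (density M (\<lambda>_. ennreal (1/m)))"
      if "finite_measure M" "sets M = sets borel" "m = measure M (space M)" for M :: "real measure"
    proof -
      interpret finite_measure M by fact
      have "emeasure (density M (\<lambda>_. ennreal (1/m))) (space M) = 1"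
        using eP[of "space M" M] mpos that(3) by (simp add: emeasure_eq_measure ennreal_mult'[symmetric])
      then show ?thesis unfolding real_distribution_def real_distribution_axioms_def
        using that(2) by (auto intro!: prob_spaceI simp: space_density)
    qed
    have chP: "char (density M (\<lambda>_. ennreal (1/m))) t = (1/m) *\<^sub>R char M t"
      if "sets M = sets borel" for M :: "real measure" and t
    proof -
      have b: "(\<lambda>x. iexp (t * x)) \<in> borel_measurable borel"
        by (intro borel_measurable_continuous_onI) (auto intro!: continuous_intros)
      have "(\<lambda>x. iexp (t * x)) \<in> borel_measurable M" by (subst measurable_cong_sets[OF that refl]) (rule b)
      then have "integral\<^sup>L (density M (\<lambda>_. ennreal (1/m))) (\<lambda>x. iexp (t * x)) = integral\<^sup>L M (\<lambda>x. (1/m) *\<^sub>R iexp (t * x))"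
        using mpos by (intro integral_density) auto
      then show ?thesis unfolding char_def by simp
    qed
    have "P1 = P2" unfolding P1_def P2_def
    proof (rule Levy_uniqueness)
      show "char (density M1 (\<lambda>_. ennreal (1 / m))) = char (density M2 (\<lambda>_. ennreal (1 / m)))"
        using chP[OF s1] chP[OF s2] ch by (simp add: fun_eq_iff)
    qed (use rd[OF f1 s1 m_def] rd[OF f2 s2 m2] in auto)
    show ?thesis
    proof (rule measure_eqI)
      show "sets M1 = sets M2" using s1 s2 by simp
      fix A assume A: "A \<in> sets M1"
      have "ennreal (1/m) * emeasure M1 A = ennreal (1/m) * emeasure M2 A"
        using eP[of A M1] eP[of A M2] A s1 s2 \<open>P1 = P2\<close> unfolding P1_def P2_def by simp
      then show "emeasure M1 A = emeasure M2 A"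
        using mpos unfolding ennreal_mult_cancel_left by simp
    qed
  qed
qed

lemma integral_iexp_split:
  assumes "prob_space M" and g: "g \<in> borel_measurable M" and x: "x \<in> borel_measurable M"
    and bnd: "\<And>\<omega>. \<bar>g \<omega>\<bar> \<le> K"
  shows "(\<integral>\<omega>. g \<omega> *\<^sub>R iexp (x \<omega>) \<partial>M) =
     complex_of_real (\<integral>\<omega>. g \<omega> * cos (x \<omega>) \<partial>M) + \<i> * complex_of_real (\<integral>\<omega>. g \<omega> * sin (x \<omega>) \<partial>M)"
proof -
  interpret prob_space M by fact
  have b1: "\<bar>g \<omega> * cos (x \<omega>)\<bar> \<le> K" for \<omega>
  proof -
    have "\<bar>g \<omega>\<bar> * \<bar>cos (x \<omega>)\<bar> \<le> \<bar>g \<omega>\<bar>" by (rule mult_left_le) (simp_all add: abs_cos_le_one abs_sin_le_one)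
    then show ?thesis using bnd[of \<omega>] by (simp add: abs_mult)
  qed
  have b2: "\<bar>g \<omega> * sin (x \<omega>)\<bar> \<le> K" for \<omega>
  proof -
    have "\<bar>g \<omega>\<bar> * \<bar>sin (x \<omega>)\<bar> \<le> \<bar>g \<omega>\<bar>" by (rule mult_left_le) (simp_all add: abs_cos_le_one abs_sin_le_one)
    then show ?thesis using bnd[of \<omega>] by (simp add: abs_mult)
  qed
  have i1: "integrable M (\<lambda>\<omega>. g \<omega> * cos (x \<omega>))"
    by (rule integrable_const_bound[where B=K]) (use b1 g x in auto)
  have i2: "integrable M (\<lambda>\<omega>. g \<omega> * sin (x \<omega>))"
    by (rule integrable_const_bound[where B=K]) (use b2 g x in auto)
  have e: "g \<omega> *\<^sub>R iexp (x \<omega>) = complex_of_real (g \<omega> * cos (x \<omega>)) + \<i> * complex_of_real (g \<omega> * sin (x \<omega>))" for \<omega>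
    by (simp add: complex_eq_iff Re_exp Im_exp)
  show ?thesis
  proof -
    have j1: "integrable M (\<lambda>\<omega>. complex_of_real (g \<omega> * cos (x \<omega>)))"
      by (rule integrable_bounded_linear[OF bounded_linear_of_real i1])
    have j2: "integrable M (\<lambda>\<omega>. \<i> * complex_of_real (g \<omega> * sin (x \<omega>)))"
      by (rule integrable_mult_right, rule integrable_bounded_linear[OF bounded_linear_of_real i2])
    show ?thesis unfolding e Bochner_Integration.integral_add[OF j1 j2] integral_complex_of_real integral_mult_right_zero by (rule refl)
  qed
qed

lemma iexp_meas[measurable]: "(\<lambda>x::real. iexp (s * x)) \<in> borel_measurable borel"
  by (intro borel_measurable_continuous_onI) (auto intro!: continuous_intros)

lemma fin_dd:
  assumes "prob_space M" and g: "g \<in> borel_measurable M" and gb: "\<And>\<omega>. 0 \<le> g \<omega> \<and> g \<omega> \<le> K"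
    and A: "A \<in> borel_measurable M"
  shows "finite_measure (distr (density M (\<lambda>\<omega>. ennreal (g \<omega>))) borel A)"
proof
  interpret prob_space M by fact
  have "emeasure (distr (density M (\<lambda>\<omega>. ennreal (g \<omega>))) borel A) (space borel)
      = emeasure (density M (\<lambda>\<omega>. ennreal (g \<omega>))) (space M)"
  proof -
    have mA': "A \<in> measurable (density M (\<lambda>\<omega>. ennreal (g \<omega>))) borel" using A by simp
    show ?thesis by (simp add: emeasure_distr[OF mA'])
  qed
  also have "\<dots> = (\<integral>\<^sup>+ x. ennreal (g x) * indicator (space M) x \<partial>M)"
    using g by (subst emeasure_density) auto
  also have "\<dots> \<le> (\<integral>\<^sup>+ x. ennreal K \<partial>M)"
    by (intro nn_integral_mono) (use gb in \<open>auto split: split_indicator intro!: ennreal_leI\<close>)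
  also have "\<dots> < \<infinity>" by (simp add: emeasure_space_1)
  finally show "emeasure (distr (density M (\<lambda>\<omega>. ennreal (g \<omega>))) borel A) (space (distr (density M (\<lambda>\<omega>. ennreal (g \<omega>))) borel A)) \<noteq> \<infinity>"
    by simp
qed

lemma char_dd:
  assumes g: "g \<in> borel_measurable M" and gb: "\<And>\<omega>. 0 \<le> g \<omega>"
    and A: "A \<in> borel_measurable M"
  shows "char (distr (density M (\<lambda>\<omega>. ennreal (g \<omega>))) borel A) s = (\<integral>\<omega>. g \<omega> *\<^sub>R iexp (s * A \<omega>) \<partial>M)"
proof -
  have "char (distr (density M (\<lambda>\<omega>. ennreal (g \<omega>))) borel A) s
     = (\<integral>\<omega>. iexp (s * A \<omega>) \<partial>density M (\<lambda>\<omega>. ennreal (g \<omega>)))"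
    unfolding char_def using A by (subst integral_distr) auto
  also have "\<dots> = (\<integral>\<omega>. g \<omega> *\<^sub>R iexp (s * A \<omega>) \<partial>M)"
    using A g gb by (subst integral_density) auto
  finally show ?thesis .
qed

lemma int_dd:
  assumes g: "g \<in> borel_measurable M" and gb: "\<And>\<omega>. 0 \<le> g \<omega>"
    and A: "A \<in> borel_measurable M" and S: "S \<in> sets borel"
  shows "integral\<^sup>L (distr (density M (\<lambda>\<omega>. ennreal (g \<omega>))) borel A) (indicator S :: real \<Rightarrow> real)
      = (\<integral>\<omega>. g \<omega> * indicator S (A \<omega>) \<partial>M)"
proof -
  have "integral\<^sup>L (distr (density M (\<lambda>\<omega>. ennreal (g \<omega>))) borel A) (indicator S :: real \<Rightarrow> real)
     = (\<integral>\<omega>. indicator S (A \<omega>) \<partial>density M (\<lambda>\<omega>. ennreal (g \<omega>)))"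
    using A S by (subst integral_distr) auto
  also have "\<dots> = (\<integral>\<omega>. g \<omega> * indicator S (A \<omega>) \<partial>M)"
    using A g gb S by (subst integral_density) auto
  finally show ?thesis .
qed

lemma iexp_cos_id: "(1 + cos y) *\<^sub>R iexp x = iexp x + (iexp (x + y) + iexp (x - y)) / 2"
  by (simp add: complex_eq_iff Re_exp Im_exp cos_add sin_add cos_diff sin_diff field_simps)

lemma iexp_sin_id: "(1 + sin y) *\<^sub>R iexp x = iexp x - \<i> * (iexp (x + y) - iexp (x - y)) / 2"
  by (simp add: complex_eq_iff Re_exp Im_exp cos_add sin_add cos_diff sin_diff field_simps)

lemma integrable_iexp:
  assumes "prob_space M" "f \<in> borel_measurable M"
  shows "integrable M (\<lambda>\<omega>. iexp (f \<omega>))"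
proof -
  interpret prob_space M by fact
  show ?thesis
    by (rule integrable_const_bound[where B=1]) (use assms(2) in \<open>auto simp: norm_exp_i_times\<close>)
qed

lemma L1c:
  assumes M: "prob_space M" and [measurable]: "A \<in> borel_measurable M" "B \<in> borel_measurable M"
  shows "(\<integral>\<omega>. (1 + cos (t * B \<omega>)) *\<^sub>R iexp (s * A \<omega>) \<partial>M) =
    (\<integral>\<omega>. iexp (s * A \<omega> + 0 * B \<omega>) \<partial>M) + ((\<integral>\<omega>. iexp (s * A \<omega> + t * B \<omega>) \<partial>M) + (\<integral>\<omega>. iexp (s * A \<omega> + (-t) * B \<omega>) \<partial>M)) / 2"
proof -
  have i1: "integrable M (\<lambda>\<omega>. iexp (s * A \<omega>))" by (rule integrable_iexp[OF M]) simp
  have i2: "integrable M (\<lambda>\<omega>. iexp (s * A \<omega> + t * B \<omega>))" by (rule integrable_iexp[OF M]) simp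
  have i3: "integrable M (\<lambda>\<omega>. iexp (s * A \<omega> - t * B \<omega>))" by (rule integrable_iexp[OF M]) simp
  have "(\<integral>\<omega>. (1 + cos (t * B \<omega>)) *\<^sub>R iexp (s * A \<omega>) \<partial>M) =
     (\<integral>\<omega>. iexp (s * A \<omega>) + (iexp (s * A \<omega> + t * B \<omega>) + iexp (s * A \<omega> - t * B \<omega>)) / 2 \<partial>M)"
    by (simp only: iexp_cos_id)
  also have "\<dots> = (\<integral>\<omega>. iexp (s * A \<omega>) \<partial>M) + ((\<integral>\<omega>. iexp (s * A \<omega> + t * B \<omega>) \<partial>M) + (\<integral>\<omega>. iexp (s * A \<omega> - t * B \<omega>) \<partial>M)) / 2"
    using i1 i2 i3 by (simp add: Bochner_Integration.integral_add)
  finally show ?thesis by (simp add: algebra_simps)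
qed

lemma L1s:
  assumes M: "prob_space M" and [measurable]: "A \<in> borel_measurable M" "B \<in> borel_measurable M"
  shows "(\<integral>\<omega>. (1 + sin (t * B \<omega>)) *\<^sub>R iexp (s * A \<omega>) \<partial>M) =
    (\<integral>\<omega>. iexp (s * A \<omega> + 0 * B \<omega>) \<partial>M) - \<i> * ((\<integral>\<omega>. iexp (s * A \<omega> + t * B \<omega>) \<partial>M) - (\<integral>\<omega>. iexp (s * A \<omega> + (-t) * B \<omega>) \<partial>M)) / 2"
proof -
  have i1: "integrable M (\<lambda>\<omega>. iexp (s * A \<omega>))" by (rule integrable_iexp[OF M]) simp
  have i2: "integrable M (\<lambda>\<omega>. iexp (s * A \<omega> + t * B \<omega>))" by (rule integrable_iexp[OF M]) simp
  have i3: "integrable M (\<lambda>\<omega>. iexp (s * A \<omega> - t * B \<omega>))" by (rule integrable_iexp[OF M]) simp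
  have "(\<integral>\<omega>. (1 + sin (t * B \<omega>)) *\<^sub>R iexp (s * A \<omega>) \<partial>M) =
     (\<integral>\<omega>. iexp (s * A \<omega>) - \<i> * (iexp (s * A \<omega> + t * B \<omega>) - iexp (s * A \<omega> - t * B \<omega>)) / 2 \<partial>M)"
    by (simp only: iexp_sin_id)
  also have "\<dots> = (\<integral>\<omega>. iexp (s * A \<omega>) \<partial>M) - \<i> * ((\<integral>\<omega>. iexp (s * A \<omega> + t * B \<omega>) \<partial>M) - (\<integral>\<omega>. iexp (s * A \<omega> - t * B \<omega>) \<partial>M)) / 2"
    using i1 i2 i3 by (simp add: Bochner_Integration.integral_diff)
  finally show ?thesis by (simp add: algebra_simps)
qed

lemma nc1: "norm (cos (x::real)) \<le> 1" by (metis abs_cos_le_one real_norm_def)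
lemma ns1: "norm (sin (x::real)) \<le> 1" by (metis abs_sin_le_one real_norm_def)

lemma L2c:
  fixes A B :: "'a \<Rightarrow> real" and t :: real and S :: "real set"
  assumes M: "prob_space M" and [measurable]: "A \<in> borel_measurable M" "B \<in> borel_measurable M"
    and [measurable]: "S \<in> sets borel"
  shows "(\<integral>\<omega>. (1 + cos (t * B \<omega>)) * indicator S (A \<omega>) \<partial>M) =
     (\<integral>\<omega>. indicator S (A \<omega>) \<partial>M) + (\<integral>\<omega>. indicator S (A \<omega>) * cos (t * B \<omega>) \<partial>M)"
proof -
  interpret prob_space M by fact
  have i1: "integrable M (\<lambda>\<omega>. indicator S (A \<omega>) :: real)"
    by (rule integrable_const_bound[where B=1]) (auto split: split_indicator)
  have i2: "integrable M (\<lambda>\<omega>. indicator S (A \<omega>) * cos (t * B \<omega>))"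
    apply (rule integrable_const_bound[where B=1])
    apply (intro AE_I2, auto split: split_indicator simp: nc1)[1]
    apply measurable
    done
  have "(\<integral>\<omega>. (1 + cos (t * B \<omega>)) * indicator S (A \<omega>) \<partial>M) =
     (\<integral>\<omega>. indicator S (A \<omega>) + indicator S (A \<omega>) * cos (t * B \<omega>) \<partial>M)"
    by (simp add: algebra_simps)
  also have "\<dots> = (\<integral>\<omega>. indicator S (A \<omega>) \<partial>M) + (\<integral>\<omega>. indicator S (A \<omega>) * cos (t * B \<omega>) \<partial>M)"
    using i1 i2 by (rule Bochner_Integration.integral_add)
  finally show ?thesis .
qed

lemma L2s:
  fixes A B :: "'a \<Rightarrow> real" and t :: real and S :: "real set"
  assumes M: "prob_space M" and [measurable]: "A \<in> borel_measurable M" "B \<in> borel_measurable M"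
    and [measurable]: "S \<in> sets borel"
  shows "(\<integral>\<omega>. (1 + sin (t * B \<omega>)) * indicator S (A \<omega>) \<partial>M) =
     (\<integral>\<omega>. indicator S (A \<omega>) \<partial>M) + (\<integral>\<omega>. indicator S (A \<omega>) * sin (t * B \<omega>) \<partial>M)"
proof -
  interpret prob_space M by fact
  have i1: "integrable M (\<lambda>\<omega>. indicator S (A \<omega>) :: real)"
    by (rule integrable_const_bound[where B=1]) (auto split: split_indicator)
  have i2: "integrable M (\<lambda>\<omega>. indicator S (A \<omega>) * sin (t * B \<omega>))"
    apply (rule integrable_const_bound[where B=1])
    apply (intro AE_I2, auto split: split_indicator simp: ns1)[1]
    apply measurable
    done
  have "(\<integral>\<omega>. (1 + sin (t * B \<omega>)) * indicator S (A \<omega>) \<partial>M) =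
     (\<integral>\<omega>. indicator S (A \<omega>) + indicator S (A \<omega>) * sin (t * B \<omega>) \<partial>M)"
    by (simp add: algebra_simps)
  also have "\<dots> = (\<integral>\<omega>. indicator S (A \<omega>) \<partial>M) + (\<integral>\<omega>. indicator S (A \<omega>) * sin (t * B \<omega>) \<partial>M)"
    using i1 i2 by (rule Bochner_Integration.integral_add)
  finally show ?thesis .
qed

lemma pair_law:
  fixes A B :: "'a \<Rightarrow> real" and A' B' :: "'b \<Rightarrow> real"
  assumes M: "prob_space M" and N: "prob_space N"
    and mA[measurable]: "A \<in> borel_measurable M" and mB[measurable]: "B \<in> borel_measurable M"
    and mA'[measurable]: "A' \<in> borel_measurable N" and mB'[measurable]: "B' \<in> borel_measurable N"
    and ch: "\<And>s t. (\<integral>\<omega>. iexp (s * A \<omega> + t * B \<omega>) \<partial>M) = (\<integral>\<omega>. iexp (s * A' \<omega> + t * B' \<omega>) \<partial>N)"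
    and S[measurable]: "S \<in> sets borel"
  shows "distr (density M (\<lambda>\<omega>. ennreal (indicator S (A \<omega>)))) borel B
       = distr (density N (\<lambda>\<omega>. ennreal (indicator S (A' \<omega>)))) borel B'"
proof -
  have cb: "0 \<le> 1 + cos x \<and> 1 + cos x \<le> 2" for x :: real
    using cos_ge_minus_one[of x] cos_le_one[of x] by linarith
  have sb: "0 \<le> 1 + sin x \<and> 1 + sin x \<le> 2" for x :: real
    using sin_ge_minus_one[of x] sin_le_one[of x] by linarith
  have \<rho>c: "distr (density M (\<lambda>\<omega>. ennreal (1 + cos (t * B \<omega>)))) borel A
      = distr (density N (\<lambda>\<omega>. ennreal (1 + cos (t * B' \<omega>)))) borel A'" for t
  proof (rule char_unique_finite)
    show "finite_measure (distr (density M (\<lambda>\<omega>. ennreal (1 + cos (t * B \<omega>)))) borel A)"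
      by (rule fin_dd[OF M _ cb]) simp_all
    show "finite_measure (distr (density N (\<lambda>\<omega>. ennreal (1 + cos (t * B' \<omega>)))) borel A')"
      by (rule fin_dd[OF N _ cb]) simp_all
    show "char (distr (density M (\<lambda>\<omega>. ennreal (1 + cos (t * B \<omega>)))) borel A)
        = char (distr (density N (\<lambda>\<omega>. ennreal (1 + cos (t * B' \<omega>)))) borel A')"
    proof
      fix s
      show "char (distr (density M (\<lambda>\<omega>. ennreal (1 + cos (t * B \<omega>)))) borel A) s
        = char (distr (density N (\<lambda>\<omega>. ennreal (1 + cos (t * B' \<omega>)))) borel A') s"
        apply (subst char_dd, simp, use cb in blast, simp)
        apply (subst char_dd, simp, use cb in blast, simp)
        apply (simp only: L1c[OF M mA mB] L1c[OF N mA' mB'] ch)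
        done
    qed
  qed simp_all
  have \<rho>s: "distr (density M (\<lambda>\<omega>. ennreal (1 + sin (t * B \<omega>)))) borel A
      = distr (density N (\<lambda>\<omega>. ennreal (1 + sin (t * B' \<omega>)))) borel A'" for t
  proof (rule char_unique_finite)
    show "finite_measure (distr (density M (\<lambda>\<omega>. ennreal (1 + sin (t * B \<omega>)))) borel A)"
      by (rule fin_dd[OF M _ sb]) simp_all
    show "finite_measure (distr (density N (\<lambda>\<omega>. ennreal (1 + sin (t * B' \<omega>)))) borel A')"
      by (rule fin_dd[OF N _ sb]) simp_all
    show "char (distr (density M (\<lambda>\<omega>. ennreal (1 + sin (t * B \<omega>)))) borel A)
        = char (distr (density N (\<lambda>\<omega>. ennreal (1 + sin (t * B' \<omega>)))) borel A')"
    proof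
      fix s
      show "char (distr (density M (\<lambda>\<omega>. ennreal (1 + sin (t * B \<omega>)))) borel A) s
        = char (distr (density N (\<lambda>\<omega>. ennreal (1 + sin (t * B' \<omega>)))) borel A') s"
        apply (subst char_dd, simp, use sb in blast, simp)
        apply (subst char_dd, simp, use sb in blast, simp)
        apply (simp only: L1s[OF M mA mB] L1s[OF N mA' mB'] ch)
        done
    qed
  qed simp_all
  have Ec: "(\<integral>\<omega>. (1 + cos (t * B \<omega>)) * indicator S (A \<omega>) \<partial>M) = (\<integral>\<omega>. (1 + cos (t * B' \<omega>)) * indicator S (A' \<omega>) \<partial>N)" for t
    using int_dd[of "\<lambda>\<omega>. 1 + cos (t * B \<omega>)" M A S] int_dd[of "\<lambda>\<omega>. 1 + cos (t * B' \<omega>)" N A' S] \<rho>c[of t] cb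
    by simp
  have Es: "(\<integral>\<omega>. (1 + sin (t * B \<omega>)) * indicator S (A \<omega>) \<partial>M) = (\<integral>\<omega>. (1 + sin (t * B' \<omega>)) * indicator S (A' \<omega>) \<partial>N)" for t
    using int_dd[of "\<lambda>\<omega>. 1 + sin (t * B \<omega>)" M A S] int_dd[of "\<lambda>\<omega>. 1 + sin (t * B' \<omega>)" N A' S] \<rho>s[of t] sb
    by simp
  have p0: "(\<integral>\<omega>. indicator S (A \<omega>) \<partial>M) = (\<integral>\<omega>. (indicator S (A' \<omega>) :: real) \<partial>N)"
    using Ec[of 0] by simp
  have Jc: "(\<integral>\<omega>. indicator S (A \<omega>) * cos (t * B \<omega>) \<partial>M) = (\<integral>\<omega>. indicator S (A' \<omega>) * cos (t * B' \<omega>) \<partial>N)" for t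
    using Ec[of t] L2c[OF M _ _ S, of A B t] L2c[OF N _ _ S, of A' B' t] p0 by simp
  have Js: "(\<integral>\<omega>. indicator S (A \<omega>) * sin (t * B \<omega>) \<partial>M) = (\<integral>\<omega>. indicator S (A' \<omega>) * sin (t * B' \<omega>) \<partial>N)" for t
    using Es[of t] L2s[OF M _ _ S, of A B t] L2s[OF N _ _ S, of A' B' t] p0 by simp
  have ib: "0 \<le> (indicator S x :: real) \<and> (indicator S x :: real) \<le> 1" for x
    by (simp split: split_indicator)
  show ?thesis
  proof (rule char_unique_finite)
    show "finite_measure (distr (density M (\<lambda>\<omega>. ennreal (indicator S (A \<omega>)))) borel B)"
      by (rule fin_dd[OF M _ ib]) simp_all
    show "finite_measure (distr (density N (\<lambda>\<omega>. ennreal (indicator S (A' \<omega>)))) borel B')"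
      by (rule fin_dd[OF N _ ib]) simp_all
    show "char (distr (density M (\<lambda>\<omega>. ennreal (indicator S (A \<omega>)))) borel B)
        = char (distr (density N (\<lambda>\<omega>. ennreal (indicator S (A' \<omega>)))) borel B')"
    proof
      fix t
      have a1: "\<bar>indicator S (A \<omega>) :: real\<bar> \<le> 1" for \<omega> by (simp split: split_indicator)
      have a2: "\<bar>indicator S (A' \<omega>) :: real\<bar> \<le> 1" for \<omega> by (simp split: split_indicator)
      show "char (distr (density M (\<lambda>\<omega>. ennreal (indicator S (A \<omega>)))) borel B) t
        = char (distr (density N (\<lambda>\<omega>. ennreal (indicator S (A' \<omega>)))) borel B') t"
        apply (subst char_dd, simp, use ib in blast, simp)
        apply (subst char_dd, simp, use ib in blast, simp)
        apply (subst integral_iexp_split[OF M _ _ a1], simp, simp)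
        apply (subst integral_iexp_split[OF N _ _ a2], simp, simp)
        apply (simp only: Jc Js)
        done
    qed
  qed simp_all
qed

lemma finite_cos_eq: "finite {x \<in> {\<alpha>..\<beta>}. cos x = (d::real)}"
proof (cases "-1 \<le> d \<and> d \<le> 1")
  case False
  then have "{x \<in> {\<alpha>..\<beta>}. cos x = d} = {}"
    using cos_ge_minus_one cos_le_one by force
  then show ?thesis by (metis finite.emptyI)
next
  case True
  define y where "y = arccos d"
  have cy: "cos y = d" and y0: "0 \<le> y" and yp: "y \<le> pi" using True arccos[of d] y_def by auto
  define N where "N = ceiling (\<bar>\<alpha>\<bar> + \<bar>\<beta>\<bar> + 4)"
  have bnd: "\<bar>i\<bar> \<le> N" if "real_of_int i * (2 * pi) = z" "\<bar>z\<bar> \<le> \<bar>\<alpha>\<bar> + \<bar>\<beta>\<bar> + 4" for i z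
  proof -
    have "\<bar>real_of_int i\<bar> \<le> \<bar>real_of_int i\<bar> * (2 * pi)"
      using pi_gt3 by (intro mult_le_cancel_left1[THEN iffD2]) auto
    also have "\<dots> = \<bar>z\<bar>" using that(1) pi_gt3 by (auto simp: abs_mult)
    finally have "real_of_int \<bar>i\<bar> \<le> \<bar>\<alpha>\<bar> + \<bar>\<beta>\<bar> + 4" using that(2) by simp
    then show ?thesis unfolding N_def by (meson le_ceiling_iff order_refl of_int_le_iff order_trans le_of_int_ceiling ceiling_mono)
  qed
  have "{x \<in> {\<alpha>..\<beta>}. cos x = d} \<subseteq> (\<lambda>i::int. 2 * of_int i * pi - y) ` {-N..N} \<union> (\<lambda>i::int. 2 * of_int i * pi + y) ` {-N..N}"
  proof
    fix x assume x: "x \<in> {x \<in> {\<alpha>..\<beta>}. cos x = d}"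
    then have xb: "\<bar>x\<bar> \<le> \<bar>\<alpha>\<bar> + \<bar>\<beta>\<bar>" by auto
    have "cos x - cos y = 0" using x cy by simp
    then have "sin ((x + y) / 2) = 0 \<or> sin ((y - x) / 2) = 0" by (simp add: cos_diff_cos)
    then show "x \<in> (\<lambda>i::int. 2 * of_int i * pi - y) ` {-N..N} \<union> (\<lambda>i::int. 2 * of_int i * pi + y) ` {-N..N}"
    proof
      assume "sin ((x + y) / 2) = 0"
      then obtain i :: int where i: "(x + y) / 2 = of_int i * pi" by (auto simp: sin_zero_iff_int2)
      have "\<bar>x + y\<bar> \<le> \<bar>\<alpha>\<bar> + \<bar>\<beta>\<bar> + 4" using abs_triangle_ineq[of x y] xb y0 yp pi_less_4 by linarith
      moreover have "real_of_int i * (2 * pi) = x + y" using i by (simp add: field_simps)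
      ultimately have "\<bar>i\<bar> \<le> N" using bnd by blast
      moreover have "x = 2 * of_int i * pi - y" using i by (simp add: field_simps)
      ultimately have "x \<in> (\<lambda>i::int. 2 * of_int i * pi - y) ` {-N..N}"
        by (intro image_eqI[of _ _ "i"]) auto
      then show ?thesis by blast
    next
      assume "sin ((y - x) / 2) = 0"
      then obtain i :: int where i: "(y - x) / 2 = of_int i * pi" by (auto simp: sin_zero_iff_int2)
      have "\<bar>x - y\<bar> \<le> \<bar>\<alpha>\<bar> + \<bar>\<beta>\<bar> + 4" using abs_triangle_ineq4[of x y] xb y0 yp pi_less_4 by linarith
      moreover have "real_of_int (-i) * (2 * pi) = x - y" using i by (simp add: field_simps)
      ultimately have "\<bar>-i\<bar> \<le> N" using bnd by blast
      moreover have "x = 2 * of_int (-i) * pi + y" using i by (simp add: field_simps)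
      ultimately have "x \<in> (\<lambda>i::int. 2 * of_int i * pi + y) ` {-N..N}"
        by (intro image_eqI[of _ _ "-i"]) auto
      then show ?thesis by blast
    qed
  qed
  then show ?thesis by (rule finite_subset) auto
qed

lemma BI:
  fixes f :: "real \<Rightarrow> real"
  assumes [measurable]: "f \<in> borel_measurable borel" and b: "\<And>\<theta>. \<bar>f \<theta>\<bar> \<le> K"
  shows "integrable lborel (\<lambda>\<theta>. indicator {0..2*pi} \<theta> * f \<theta>)"
proof (rule integrableI_bounded_set[where A="{0..2*pi}" and B=K])
  show "AE x in lborel. x \<in> {0..2 * pi} \<longrightarrow> norm (indicator {0..2 * pi} x * f x) \<le> K"
    using b by (intro AE_I2) auto
qed auto

lemma rot_sq: "(cos \<theta> * a - sin \<theta> * b)^2 + (sin \<theta> * a + cos \<theta> * b)^2 = a^2 + (b::real)^2"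
proof -
  have "(cos \<theta> * a - sin \<theta> * b)^2 + (sin \<theta> * a + cos \<theta> * b)^2 = ((sin \<theta>)^2 + (cos \<theta>)^2) * (a^2 + b^2)"
    by algebra
  also have "(sin \<theta>)^2 + (cos \<theta>)^2 = 1" by (rule sin_cos_squared_add)
  finally show ?thesis by simp
qed

lemma clamp_nonneg:
  fixes l u x :: real assumes "l \<le> 0" "0 \<le> u"
  shows "0 \<le> max l (min u x) * x - indicator {l..u} x * x^2"
proof (cases "x < l")
  case True then show ?thesis using assms by (auto simp: mult_nonpos_nonpos)
next
  case False
  show ?thesis
  proof (cases "u < x")
    case True then show ?thesis using assms False by auto
  next
    case False2: False
    then show ?thesis using \<open>\<not> x < l\<close> by (simp add: power2_eq_square)
  qed
qed

lemma clamp_abs: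
  fixes l u x :: real assumes "l \<le> 0" "0 \<le> u"
  shows "\<bar>max l (min u x)\<bar> \<le> \<bar>x\<bar>"
  using assms by auto

lemma finite_Uf:
  fixes a b c :: real
  assumes ab: "\<not> (a = 0 \<and> b = 0)"
  shows "finite {\<theta> \<in> {0..2*pi}. cos \<theta> * a - sin \<theta> * b = c}"
proof -
  define r where "r = sqrt (a^2 + b^2)"
  have "a^2 + b^2 > 0" using ab by (auto simp: add_pos_nonneg sum_power2_gt_zero_iff)
  then have r0: "r > 0" unfolding r_def by simp
  have "(a/r)^2 + (b/r)^2 = 1" using r0 ab \<open>a^2 + b^2 > 0\<close> unfolding r_def by (simp add: power_divide add_divide_distrib[symmetric])
  then obtain \<phi> where \<phi>: "a/r = cos \<phi>" "b/r = sin \<phi>" by (rule sincos_total_2pi) auto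
  have U: "cos \<theta> * a - sin \<theta> * b = r * cos (\<theta> + \<phi>)" for \<theta>
  proof -
    have "a = r * cos \<phi>" "b = r * sin \<phi>" using \<phi> r0 by (auto simp: field_simps)
    then show ?thesis by (simp add: cos_add algebra_simps)
  qed
  have "{\<theta> \<in> {0..2*pi}. cos \<theta> * a - sin \<theta> * b = c} \<subseteq> (\<lambda>x. x - \<phi>) ` {x \<in> {\<phi>..2*pi+\<phi>}. cos x = c / r}"
  proof
    fix \<theta> assume "\<theta> \<in> {\<theta> \<in> {0..2*pi}. cos \<theta> * a - sin \<theta> * b = c}"
    then have t: "0 \<le> \<theta>" "\<theta> \<le> 2*pi" "r * cos (\<theta> + \<phi>) = c" using U by auto
    then have "cos (\<theta> + \<phi>) = c / r" using r0 by (simp add: field_simps)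
    then show "\<theta> \<in> (\<lambda>x. x - \<phi>) ` {x \<in> {\<phi>..2*pi+\<phi>}. cos x = c / r}"
      using t by (intro image_eqI[of _ _ "\<theta> + \<phi>"]) auto
  qed
  moreover have "finite ((\<lambda>x. x - \<phi>) ` {x \<in> {\<phi>..2*pi+\<phi>}. cos x = c / r})"
    by (intro finite_imageI finite_cos_eq)
  ultimately show ?thesis by (rule finite_subset)
qed

lemma PW_HK:
  fixes a b l u :: real
  assumes l0: "l \<le> 0" and u0: "0 \<le> u"
  shows "((\<lambda>\<theta>. max l (min u (cos \<theta> * a - sin \<theta> * b)) * (cos \<theta> * a - sin \<theta> * b)
           - indicator {l..u} (cos \<theta> * a - sin \<theta> * b) * (sin \<theta> * a + cos \<theta> * b)^2) has_integral 0) {0..2*pi}"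
proof (cases "a = 0 \<and> b = 0")
  case True
  then show ?thesis by simp
next
  case False
  define Uf where "Uf \<theta> = cos \<theta> * a - sin \<theta> * b" for \<theta>
  define Wf where "Wf \<theta> = sin \<theta> * a + cos \<theta> * b" for \<theta>
  define h where "h x = max l (min u x)" for x :: real
  define f' where "f' \<theta> = h (Uf \<theta>) * Uf \<theta> - indicator {l..u} (Uf \<theta>) * (Wf \<theta>)^2" for \<theta>
  define H where "H \<theta> = h (Uf \<theta>) * Wf \<theta>" for \<theta>
  define E where "E = {\<theta> \<in> {0..2*pi}. Uf \<theta> = l} \<union> {\<theta> \<in> {0..2*pi}. Uf \<theta> = u}"
  have fE: "finite E" unfolding E_def Uf_def using finite_Uf[OF False] by blast
  have cU: "continuous_on UNIV Uf" unfolding Uf_def by (intro continuous_intros)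
  have cW: "continuous_on UNIV Wf" unfolding Wf_def by (intro continuous_intros)
  have dU: "(Uf has_real_derivative (- Wf \<theta>)) (at \<theta>)" for \<theta>
    unfolding Uf_def Wf_def by (rule derivative_eq_intros refl | simp)+
  have dW: "(Wf has_real_derivative (Uf \<theta>)) (at \<theta>)" for \<theta>
    unfolding Uf_def Wf_def by (rule derivative_eq_intros refl | simp)+
  have deriv: "(H has_vector_derivative f' \<theta>) (at \<theta>)" if \<theta>: "\<theta> \<in> {0<..<2*pi} - E" for \<theta>
  proof -
    have nl: "Uf \<theta> \<noteq> l" and nu: "Uf \<theta> \<noteq> u" using \<theta> unfolding E_def by auto
    have "(H has_real_derivative f' \<theta>) (at \<theta>)"
    proof (cases "Uf \<theta> < l")
      case True
      have "((\<lambda>z. l * Wf z) has_real_derivative l * Uf \<theta>) (at \<theta>)" by (rule DERIV_cmult[OF dW])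
      moreover have "f' \<theta> = l * Uf \<theta>" unfolding f'_def h_def using True l0 u0 by auto
      ultimately have d: "((\<lambda>z. l * Wf z) has_real_derivative f' \<theta>) (at \<theta>)" by simp
      show ?thesis
      proof (rule has_field_derivative_transform_within_open[OF d])
        show "open {z. Uf z < l}" using cU by (intro open_Collect_less) (auto intro: continuous_intros)
        show "\<theta> \<in> {z. Uf z < l}" using True by simp
        fix z assume "z \<in> {z. Uf z < l}"
        then show "l * Wf z = H z" unfolding H_def h_def using l0 u0 by auto
      qed
    next
      case False
      show ?thesis
      proof (cases "u < Uf \<theta>")
        case True
        have "((\<lambda>z. u * Wf z) has_real_derivative u * Uf \<theta>) (at \<theta>)" by (rule DERIV_cmult[OF dW])
        moreover have "f' \<theta> = u * Uf \<theta>" unfolding f'_def h_def using True l0 u0 by auto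
        ultimately have d: "((\<lambda>z. u * Wf z) has_real_derivative f' \<theta>) (at \<theta>)" by simp
        show ?thesis
        proof (rule has_field_derivative_transform_within_open[OF d])
          show "open {z. u < Uf z}" using cU by (intro open_Collect_less) (auto intro: continuous_intros)
          show "\<theta> \<in> {z. u < Uf z}" using True by simp
          fix z assume "z \<in> {z. u < Uf z}"
          then show "u * Wf z = H z" unfolding H_def h_def using l0 u0 by auto
        qed
      next
        case False2: False
        have in1: "l < Uf \<theta>" "Uf \<theta> < u" using False False2 nl nu by auto
        have "((\<lambda>z. Uf z * Wf z) has_real_derivative (- Wf \<theta>) * Wf \<theta> + Uf \<theta> * Uf \<theta>) (at \<theta>)"
          using DERIV_mult[OF dU dW] by (simp add: algebra_simps)
        moreover have "f' \<theta> = (- Wf \<theta>) * Wf \<theta> + Uf \<theta> * Uf \<theta>"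
          unfolding f'_def h_def using in1 by (simp add: power2_eq_square)
        ultimately have d: "((\<lambda>z. Uf z * Wf z) has_real_derivative f' \<theta>) (at \<theta>)" by simp
        show ?thesis
        proof (rule has_field_derivative_transform_within_open[OF d])
          show "open ({z. l < Uf z} \<inter> {z. Uf z < u})"
            using cU by (intro open_Int open_Collect_less) (auto intro: continuous_intros)
          show "\<theta> \<in> {z. l < Uf z} \<inter> {z. Uf z < u}" using in1 by simp
          fix z assume "z \<in> {z. l < Uf z} \<inter> {z. Uf z < u}"
          then show "Uf z * Wf z = H z" unfolding H_def h_def by auto
        qed
      qed
    qed
    then show ?thesis by (simp add: has_real_derivative_iff_has_vector_derivative)
  qed
  have cH: "continuous_on {0..2*pi} H" unfolding H_def h_def Uf_def Wf_def by (intro continuous_intros)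
  have "(f' has_integral (H (2*pi) - H 0)) {0..2*pi}"
    by (rule fundamental_theorem_of_calculus_interior_strong[OF fE _ deriv cH]) auto
  moreover have "H (2*pi) = H 0" unfolding H_def Uf_def Wf_def by simp
  ultimately have "(f' has_integral 0) {0..2*pi}" by simp
  then show ?thesis unfolding f'_def h_def Uf_def Wf_def .
qed

lemma PW:
  fixes a b l u :: real
  assumes l0: "l \<le> 0" and u0: "0 \<le> u"
  shows "0 \<le> (\<integral>\<theta>. indicator {0..2*pi} \<theta> * (indicator {l..u} (cos \<theta> * a - sin \<theta> * b) *
            ((sin \<theta> * a + cos \<theta> * b)^2 - (cos \<theta> * a - sin \<theta> * b)^2)) \<partial>lborel)"
proof -
  define U where "U \<theta> = cos \<theta> * a - sin \<theta> * b" for \<theta>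
  define W where "W \<theta> = sin \<theta> * a + cos \<theta> * b" for \<theta>
  define F' where "F' \<theta> = max l (min u (U \<theta>)) * U \<theta> - indicator {l..u} (U \<theta>) * (W \<theta>)^2" for \<theta>
  define P where "P \<theta> = max l (min u (U \<theta>)) * U \<theta> - indicator {l..u} (U \<theta>) * (U \<theta>)^2" for \<theta>
  have UW: "(U \<theta>)^2 + (W \<theta>)^2 = a^2 + b^2" for \<theta> unfolding U_def W_def by (rule rot_sq)
  have hU: "\<bar>max l (min u (U \<theta>)) * U \<theta>\<bar> \<le> (U \<theta>)^2" for \<theta>
  proof -
    have "\<bar>max l (min u (U \<theta>)) * U \<theta>\<bar> = \<bar>max l (min u (U \<theta>))\<bar> * \<bar>U \<theta>\<bar>" by (simp add: abs_mult)
    also have "\<dots> \<le> \<bar>U \<theta>\<bar> * \<bar>U \<theta>\<bar>" by (rule mult_right_mono[OF clamp_abs[OF l0 u0]]) simp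
    finally show ?thesis by (simp add: power2_eq_square abs_mult[symmetric])
  qed
  have iW: "\<bar>indicator {l..u} (U \<theta>) * (W \<theta>)^2\<bar> \<le> (W \<theta>)^2" for \<theta>
    by (simp split: split_indicator)
  have iU: "\<bar>indicator {l..u} (U \<theta>) * (U \<theta>)^2\<bar> \<le> (U \<theta>)^2" for \<theta>
    by (simp split: split_indicator)
  have bF: "\<bar>F' \<theta>\<bar> \<le> 2 * (a^2 + b^2)" for \<theta>
    using hU[of \<theta>] iW[of \<theta>] UW[of \<theta>] unfolding F'_def by (smt (verit) zero_le_power2)
  have bP: "\<bar>P \<theta>\<bar> \<le> 2 * (a^2 + b^2)" for \<theta>
    using hU[of \<theta>] iU[of \<theta>] UW[of \<theta>] unfolding P_def by (smt (verit) zero_le_power2)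
  have mF[measurable]: "F' \<in> borel_measurable borel" unfolding F'_def U_def W_def by measurable
  have mP[measurable]: "P \<in> borel_measurable borel" unfolding P_def U_def W_def by measurable
  have iF: "integrable lborel (\<lambda>\<theta>. indicator {0..2*pi} \<theta> * F' \<theta>)" by (rule BI[OF mF bF])
  have iP: "integrable lborel (\<lambda>\<theta>. indicator {0..2*pi} \<theta> * P \<theta>)" by (rule BI[OF mP bP])
  have si: "set_integrable lborel {0..2*pi} F'" using iF unfolding set_integrable_def by simp
  have "(F' has_integral 0) {0..2*pi}" unfolding F'_def U_def W_def by (rule PW_HK[OF l0 u0])
  then have "integral {0..2*pi} F' = 0" by (rule integral_unique)
  then have F0: "(\<integral>\<theta>. indicator {0..2*pi} \<theta> * F' \<theta> \<partial>lborel) = 0"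
    using set_borel_integral_eq_integral(2)[OF si] unfolding set_lebesgue_integral_def by simp
  have P0: "0 \<le> (\<integral>\<theta>. indicator {0..2*pi} \<theta> * P \<theta> \<partial>lborel)"
  proof (intro Bochner_Integration.integral_nonneg mult_nonneg_nonneg)
    fix \<theta> show "0 \<le> P \<theta>" unfolding P_def by (rule clamp_nonneg[OF l0 u0])
  qed simp
  have eq: "indicator {0..2*pi} \<theta> * (indicator {l..u} (cos \<theta> * a - sin \<theta> * b) *
            ((sin \<theta> * a + cos \<theta> * b)^2 - (cos \<theta> * a - sin \<theta> * b)^2))
     = indicator {0..2*pi} \<theta> * P \<theta> - indicator {0..2*pi} \<theta> * F' \<theta>" for \<theta>
    unfolding P_def F'_def U_def W_def by (simp add: algebra_simps)
  show ?thesis unfolding eq Bochner_Integration.integral_diff[OF iP iF] F0 using P0 by simp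
qed

lemma int_dd2:
  fixes f :: "real \<Rightarrow> real"
  assumes g[measurable]: "g \<in> borel_measurable M" and gb: "\<And>\<omega>. 0 \<le> g \<omega>"
    and B[measurable]: "B \<in> borel_measurable M" and f[measurable]: "f \<in> borel_measurable borel"
  shows "integral\<^sup>L (distr (density M (\<lambda>\<omega>. ennreal (g \<omega>))) borel B) f = (\<integral>\<omega>. g \<omega> * f (B \<omega>) \<partial>M)"
proof -
  have "integral\<^sup>L (distr (density M (\<lambda>\<omega>. ennreal (g \<omega>))) borel B) f
     = (\<integral>\<omega>. f (B \<omega>) \<partial>density M (\<lambda>\<omega>. ennreal (g \<omega>)))"
    by (subst integral_distr) auto
  also have "\<dots> = (\<integral>\<omega>. g \<omega> * f (B \<omega>) \<partial>M)"
    using gb by (subst integral_density) auto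
  finally show ?thesis .
qed

lemma pair_int:
  fixes A B :: "'a \<Rightarrow> real" and A' B' :: "'b \<Rightarrow> real" and f :: "real \<Rightarrow> real"
  assumes M: "prob_space M" and N: "prob_space N"
    and mA[measurable]: "A \<in> borel_measurable M" and mB[measurable]: "B \<in> borel_measurable M"
    and mA'[measurable]: "A' \<in> borel_measurable N" and mB'[measurable]: "B' \<in> borel_measurable N"
    and ch: "\<And>s t. (\<integral>\<omega>. iexp (s * A \<omega> + t * B \<omega>) \<partial>M) = (\<integral>\<omega>. iexp (s * A' \<omega> + t * B' \<omega>) \<partial>N)"
    and S[measurable]: "S \<in> sets borel" and f[measurable]: "f \<in> borel_measurable borel"
  shows "(\<integral>\<omega>. indicator S (A \<omega>) * f (B \<omega>) \<partial>M) = (\<integral>\<omega>. indicator S (A' \<omega>) * f (B' \<omega>) \<partial>N)"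
proof -
  have e: "distr (density M (\<lambda>\<omega>. ennreal (indicator S (A \<omega>)))) borel B
       = distr (density N (\<lambda>\<omega>. ennreal (indicator S (A' \<omega>)))) borel B'"
    by (rule pair_law[OF M N mA mB mA' mB' ch S])
  have "(\<integral>\<omega>. indicator S (A \<omega>) * f (B \<omega>) \<partial>M) = integral\<^sup>L (distr (density M (\<lambda>\<omega>. ennreal (indicator S (A \<omega>)))) borel B) f"
    by (rule int_dd2[symmetric]) auto
  also have "\<dots> = integral\<^sup>L (distr (density N (\<lambda>\<omega>. ennreal (indicator S (A' \<omega>)))) borel B') f"
    by (simp only: e)
  also have "\<dots> = (\<integral>\<omega>. indicator S (A' \<omega>) * f (B' \<omega>) \<partial>N)"
    by (rule int_dd2) auto
  finally show ?thesis .
qed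

lemma rot_ineq:
  fixes U W :: "'a \<Rightarrow> real" and \<psi> :: "real \<Rightarrow> complex" and l u :: real
  assumes M: "prob_space M" and mU[measurable]: "U \<in> borel_measurable M" and mW[measurable]: "W \<in> borel_measurable M"
    and iU: "integrable M (\<lambda>\<omega>. (U \<omega>)^2)" and iW: "integrable M (\<lambda>\<omega>. (W \<omega>)^2)"
    and ch: "\<And>s t. (\<integral>\<omega>. iexp (s * U \<omega> + t * W \<omega>) \<partial>M) = \<psi> (s^2 + t^2)"
    and l0: "l \<le> 0" and u0: "0 \<le> u"
  shows "(\<integral>\<omega>. indicator {l..u} (U \<omega>) * (U \<omega>)^2 \<partial>M) \<le> (\<integral>\<omega>. indicator {l..u} (U \<omega>) * (W \<omega>)^2 \<partial>M)"
proof -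
  interpret prob_space M by fact
  define Ut where "Ut \<theta> \<omega> = cos \<theta> * U \<omega> - sin \<theta> * W \<omega>" for \<theta> \<omega>
  define Wt where "Wt \<theta> \<omega> = sin \<theta> * U \<omega> + cos \<theta> * W \<omega>" for \<theta> \<omega>
  have mUt[measurable]: "Ut \<theta> \<in> borel_measurable M" for \<theta> unfolding Ut_def by measurable
  have mWt[measurable]: "Wt \<theta> \<in> borel_measurable M" for \<theta> unfolding Wt_def by measurable
  have UW: "(Ut \<theta> \<omega>)^2 + (Wt \<theta> \<omega>)^2 = (U \<omega>)^2 + (W \<omega>)^2" for \<theta> \<omega>
    unfolding Ut_def Wt_def by (rule rot_sq)
  have iUW: "integrable M (\<lambda>\<omega>. (U \<omega>)^2 + (W \<omega>)^2)" using iU iW by simp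
  have intb: "integrable M (\<lambda>\<omega>. indicator {l..u} (X \<omega>) * (Y \<omega>)^2)"
    if [measurable]: "X \<in> borel_measurable M" "Y \<in> borel_measurable M" and b: "\<And>\<omega>. (Y \<omega>)^2 \<le> (U \<omega>)^2 + (W \<omega>)^2" for X Y
  proof (rule Bochner_Integration.integrable_bound[OF iUW])
    show "(\<lambda>\<omega>. indicator {l..u} (X \<omega>) * (Y \<omega>)^2) \<in> borel_measurable M" by measurable
    show "AE \<omega> in M. norm (indicator {l..u} (X \<omega>) * (Y \<omega>)\<^sup>2) \<le> norm ((U \<omega>)\<^sup>2 + (W \<omega>)\<^sup>2)"
      using b by (intro AE_I2) (auto split: split_indicator)
  qed
  have bU: "(Ut \<theta> \<omega>)^2 \<le> (U \<omega>)^2 + (W \<omega>)^2" for \<theta> \<omega> using UW[of \<theta> \<omega>] by (metis le_add_same_cancel1 zero_le_power2)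
  have bW: "(Wt \<theta> \<omega>)^2 \<le> (U \<omega>)^2 + (W \<omega>)^2" for \<theta> \<omega> using UW[of \<theta> \<omega>] by (metis le_add_same_cancel2 zero_le_power2)
  have bU0: "(U \<omega>)^2 \<le> (U \<omega>)^2 + (W \<omega>)^2" for \<omega> by simp
  have bW0: "(W \<omega>)^2 \<le> (U \<omega>)^2 + (W \<omega>)^2" for \<omega> by simp
  have cht: "(\<integral>\<omega>. iexp (s * Ut \<theta> \<omega> + t * Wt \<theta> \<omega>) \<partial>M) = \<psi> (s^2 + t^2)" for \<theta> s t
  proof -
    have pe: "s * Ut \<theta> \<omega> + t * Wt \<theta> \<omega> = (cos \<theta> * s + sin \<theta> * t) * U \<omega> + (cos \<theta> * t - sin \<theta> * s) * W \<omega>" for \<omega>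
      unfolding Ut_def Wt_def by (simp add: algebra_simps)
    have "(\<integral>\<omega>. iexp (s * Ut \<theta> \<omega> + t * Wt \<theta> \<omega>) \<partial>M) = \<psi> ((cos \<theta> * s + sin \<theta> * t)^2 + (cos \<theta> * t - sin \<theta> * s)^2)"
      by (simp only: pe ch)
    also have "(cos \<theta> * s + sin \<theta> * t)^2 + (cos \<theta> * t - sin \<theta> * s)^2 = s^2 + t^2"
      using rot_sq[of \<theta> s "-t"] by (simp add: power2_eq_square algebra_simps)
    finally show ?thesis .
  qed
  have E1: "(\<integral>\<omega>. indicator {l..u} (Ut \<theta> \<omega>) * (Wt \<theta> \<omega>)^2 \<partial>M) = (\<integral>\<omega>. indicator {l..u} (U \<omega>) * (W \<omega>)^2 \<partial>M)" for \<theta>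
  proof -
    have c: "\<And>s t. (\<integral>\<omega>. iexp (s * Ut \<theta> \<omega> + t * Wt \<theta> \<omega>) \<partial>M) = (\<integral>\<omega>. iexp (s * U \<omega> + t * W \<omega>) \<partial>M)"
      by (simp only: cht ch)
    show ?thesis by (rule pair_int[OF M M mUt mWt mU mW c]) auto
  qed
  have E2: "(\<integral>\<omega>. indicator {l..u} (Ut \<theta> \<omega>) * (Ut \<theta> \<omega>)^2 \<partial>M) = (\<integral>\<omega>. indicator {l..u} (U \<omega>) * (U \<omega>)^2 \<partial>M)" for \<theta>
  proof (rule pair_int[OF M M mUt mUt mU mU, where S="{l..u}" and f="\<lambda>y. y^2"])
    fix s t
    have "(\<integral>\<omega>. iexp (s * Ut \<theta> \<omega> + t * Ut \<theta> \<omega>) \<partial>M) = (\<integral>\<omega>. iexp ((s + t) * Ut \<theta> \<omega> + 0 * Wt \<theta> \<omega>) \<partial>M)"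
      by (simp add: distrib_right)
    also have "\<dots> = \<psi> ((s + t)^2 + 0^2)" by (simp only: cht)
    also have "\<dots> = (\<integral>\<omega>. iexp ((s + t) * U \<omega> + 0 * W \<omega>) \<partial>M)" by (simp only: ch)
    also have "\<dots> = (\<integral>\<omega>. iexp (s * U \<omega> + t * U \<omega>) \<partial>M)" by (simp add: distrib_right)
    finally show "(\<integral>\<omega>. iexp (s * Ut \<theta> \<omega> + t * Ut \<theta> \<omega>) \<partial>M) = (\<integral>\<omega>. iexp (s * U \<omega> + t * U \<omega>) \<partial>M)" .
  qed auto
  define D0 where "D0 = (\<integral>\<omega>. indicator {l..u} (U \<omega>) * (W \<omega>)^2 \<partial>M) - (\<integral>\<omega>. indicator {l..u} (U \<omega>) * (U \<omega>)^2 \<partial>M)"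
  define G where "G \<theta> \<omega> = indicator {0..2*pi} \<theta> * (indicator {l..u} (Ut \<theta> \<omega>) * ((Wt \<theta> \<omega>)^2 - (Ut \<theta> \<omega>)^2))" for \<theta> \<omega>
  have Dt: "(\<integral>\<omega>. G \<theta> \<omega> \<partial>M) = indicator {0..2*pi} \<theta> * D0" for \<theta>
  proof -
    have "(\<integral>\<omega>. G \<theta> \<omega> \<partial>M) = indicator {0..2*pi} \<theta> * (\<integral>\<omega>. indicator {l..u} (Ut \<theta> \<omega>) * (Wt \<theta> \<omega>)^2 - indicator {l..u} (Ut \<theta> \<omega>) * (Ut \<theta> \<omega>)^2 \<partial>M)"
    proof -
      have "G \<theta> = (\<lambda>\<omega>. indicator {0..2*pi} \<theta> * (indicator {l..u} (Ut \<theta> \<omega>) * (Wt \<theta> \<omega>)^2 - indicator {l..u} (Ut \<theta> \<omega>) * (Ut \<theta> \<omega>)^2))"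
        unfolding G_def by (simp add: fun_eq_iff algebra_simps)
      then show ?thesis by (simp only: integral_mult_right_zero)
    qed
    also have "\<dots> = indicator {0..2*pi} \<theta> * D0"
      unfolding D0_def
      by (subst Bochner_Integration.integral_diff) (auto intro!: intb bU bW simp: E1 E2)
    finally show ?thesis .
  qed
  interpret P: pair_sigma_finite lborel M
    unfolding pair_sigma_finite_def using sigma_finite_lborel prob_space_imp_sigma_finite[OF M] by auto
  have mG[measurable]: "(\<lambda>x. G (fst x) (snd x)) \<in> borel_measurable (lborel \<Otimes>\<^sub>M M)"
    unfolding G_def Ut_def Wt_def by measurable
  have bG: "\<bar>G \<theta> \<omega>\<bar> \<le> indicator {0..2*pi} \<theta> * ((U \<omega>)^2 + (W \<omega>)^2)" for \<theta> \<omega>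
  proof -
    have "\<bar>indicator {l..u} (Ut \<theta> \<omega>) * ((Wt \<theta> \<omega>)^2 - (Ut \<theta> \<omega>)^2)\<bar> \<le> (U \<omega>)^2 + (W \<omega>)^2"
    proof -
      have "\<bar>(Wt \<theta> \<omega>)^2 - (Ut \<theta> \<omega>)^2\<bar> \<le> (U \<omega>)^2 + (W \<omega>)^2"
        using UW[of \<theta> \<omega>] zero_le_power2[of "Wt \<theta> \<omega>"] zero_le_power2[of "Ut \<theta> \<omega>"] by linarith
      then show ?thesis by (auto split: split_indicator)
    qed
    then show ?thesis unfolding G_def by (auto simp: abs_mult split: split_indicator)
  qed
  have iGt: "integrable M (G \<theta>)" for \<theta>
  proof (rule Bochner_Integration.integrable_bound[OF iUW])
    show "G \<theta> \<in> borel_measurable M" unfolding G_def by measurable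
    show "AE \<omega> in M. norm (G \<theta> \<omega>) \<le> norm ((U \<omega>)\<^sup>2 + (W \<omega>)\<^sup>2)"
    proof (intro AE_I2)
      fix \<omega>
      have "\<bar>G \<theta> \<omega>\<bar> \<le> indicator {0..2*pi} \<theta> * ((U \<omega>)^2 + (W \<omega>)^2)" by (rule bG)
      also have "\<dots> \<le> (U \<omega>)^2 + (W \<omega>)^2" by (simp add: indicator_def)
      finally show "norm (G \<theta> \<omega>) \<le> norm ((U \<omega>)\<^sup>2 + (W \<omega>)\<^sup>2)" by simp
    qed
  qed
  define K where "K = (\<integral>\<omega>. (U \<omega>)^2 + (W \<omega>)^2 \<partial>M)"
  have iG: "integrable (lborel \<Otimes>\<^sub>M M) (\<lambda>x. G (fst x) (snd x))"
  proof (rule P.Fubini_integrable)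
    show "AE x in lborel. integrable M (\<lambda>y. G (fst (x, y)) (snd (x, y)))" using iGt by simp
    have iK: "integrable lborel (\<lambda>\<theta>. indicator {0..2*pi} \<theta> * K)" by (rule BI[of _ "\<bar>K\<bar>"]) auto
    show "integrable lborel (\<lambda>x. \<integral>y. norm (G (fst (x, y)) (snd (x, y))) \<partial>M)"
    proof (rule Bochner_Integration.integrable_bound[OF iK])
      show "(\<lambda>x. \<integral>y. norm (G (fst (x, y)) (snd (x, y))) \<partial>M) \<in> borel_measurable lborel"
        by measurable
      show "AE x in lborel. norm (\<integral>y. norm (G (fst (x, y)) (snd (x, y))) \<partial>M) \<le> norm (indicator {0..2 * pi} x * K)"
      proof (intro AE_I2)
        fix \<theta>
        have "(\<integral>y. norm (G \<theta> y) \<partial>M) \<le> (\<integral>y. indicator {0..2*pi} \<theta> * ((U y)^2 + (W y)^2) \<partial>M)"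
          by (rule integral_mono) (use iGt bG iUW in auto)
        also have "\<dots> = indicator {0..2*pi} \<theta> * K" unfolding K_def by simp
        finally have "(\<integral>y. norm (G \<theta> y) \<partial>M) \<le> indicator {0..2*pi} \<theta> * K" .
        moreover have "0 \<le> (\<integral>y. norm (G \<theta> y) \<partial>M)" by simp
        ultimately show "norm (\<integral>y. norm (G (fst (\<theta>, y)) (snd (\<theta>, y))) \<partial>M) \<le> norm (indicator {0..2 * pi} \<theta> * K)"
          by simp
      qed
    qed
  qed simp
  have F: "(\<integral>\<omega>. (\<integral>\<theta>. G \<theta> \<omega> \<partial>lborel) \<partial>M) = (\<integral>\<theta>. (\<integral>\<omega>. G \<theta> \<omega> \<partial>M) \<partial>lborel)"
    using P.Fubini_integral[of G] iG by (simp add: case_prod_beta')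
  have L: "0 \<le> (\<integral>\<omega>. (\<integral>\<theta>. G \<theta> \<omega> \<partial>lborel) \<partial>M)"
  proof (rule Bochner_Integration.integral_nonneg)
    fix \<omega> assume "\<omega> \<in> space M"
    show "0 \<le> (\<integral>\<theta>. G \<theta> \<omega> \<partial>lborel)"
      unfolding G_def Ut_def Wt_def by (rule PW[OF l0 u0])
  qed
  have R: "(\<integral>\<theta>. (\<integral>\<omega>. G \<theta> \<omega> \<partial>M) \<partial>lborel) = 2 * pi * D0"
    unfolding Dt by simp
  have "0 \<le> D0" using L F R pi_gt_zero by (auto simp: zero_le_mult_iff)
  then show ?thesis unfolding D0_def by simp
qed

lemma mat_inner_transpose:
  fixes A :: "real^'n^'n"
  shows "(A *v a) \<bullet> b = a \<bullet> (transpose A *v b)"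
  by (metis dot_lmul_matrix inner_commute transpose_matrix_vector)

lemma iexp_cis: "iexp x = cis x" by (simp add: cis_conv_exp)

lemma lin_char:
  fixes X :: "'a \<Rightarrow> real^'d" and V :: "real^'d^'d" and lam :: "'d \<Rightarrow> real" and \<mu> :: "real^'d"
    and \<phi> :: "real \<Rightarrow> complex" and w :: "real^'d"
  assumes M: "prob_space M"
    and ell: "elliptical M X \<mu> (V ** (\<chi> i j. if i = j then lam i else 0) ** transpose V) \<phi>"
    and oV: "orthogonal_matrix V" and lp: "\<And>i. lam i > 0"
  shows "(\<integral>\<omega>. iexp (w \<bullet> (\<chi> j. ((transpose V *v X \<omega>) $ j - (transpose V *v \<mu>) $ j) / sqrt (lam j))) \<partial>M) = \<phi> (w \<bullet> w)"
proof -
  define D :: "real^'d^'d" where "D = (\<chi> i j. if i = j then lam i else 0)"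
  define v :: "real^'d" where "v = (\<chi> j. w $ j / sqrt (lam j))"
  define \<tau> where "\<tau> = V *v v"
  have p1: "w \<bullet> (\<chi> j. ((transpose V *v X \<omega>) $ j - (transpose V *v \<mu>) $ j) / sqrt (lam j)) = \<tau> \<bullet> X \<omega> - \<tau> \<bullet> \<mu>" for \<omega>
  proof -
    have "w \<bullet> (\<chi> j. ((transpose V *v X \<omega>) $ j - (transpose V *v \<mu>) $ j) / sqrt (lam j))
        = v \<bullet> (transpose V *v X \<omega> - transpose V *v \<mu>)"
      unfolding v_def inner_vec_def by (rule sum.cong) (auto simp: inner_real_def)
    also have "\<dots> = \<tau> \<bullet> X \<omega> - \<tau> \<bullet> \<mu>" unfolding \<tau>_def by (simp only: inner_diff_right mat_inner_transpose)
    finally show ?thesis .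
  qed
  have p2: "iexp (\<tau> \<bullet> X \<omega> - \<tau> \<bullet> \<mu>) = cis (\<tau> \<bullet> X \<omega>) * cis (- (\<tau> \<bullet> \<mu>))" for \<omega>
    by (simp only: iexp_cis cis_mult) simp
  have "(\<integral>\<omega>. iexp (w \<bullet> (\<chi> j. ((transpose V *v X \<omega>) $ j - (transpose V *v \<mu>) $ j) / sqrt (lam j))) \<partial>M)
      = (\<integral>\<omega>. cis (\<tau> \<bullet> X \<omega>) * cis (- (\<tau> \<bullet> \<mu>)) \<partial>M)"
    by (simp only: p1 p2)
  also have "\<dots> = (\<integral>\<omega>. cis (\<tau> \<bullet> X \<omega>) \<partial>M) * cis (- (\<tau> \<bullet> \<mu>))"
    by (rule integral_mult_left_zero)
  also have "\<dots> = cis (\<tau> \<bullet> \<mu>) * \<phi> (\<tau> \<bullet> ((V ** D ** transpose V) *v \<tau>)) * cis (- (\<tau> \<bullet> \<mu>))"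
    using ell unfolding elliptical_def D_def by simp
  also have "\<dots> = \<phi> (\<tau> \<bullet> ((V ** D ** transpose V) *v \<tau>))"
    by (simp add: cis_mult mult.commute mult.left_commute)
  also have "\<tau> \<bullet> ((V ** D ** transpose V) *v \<tau>) = w \<bullet> w"
  proof -
    have tv: "transpose V ** V = mat 1" using oV unfolding orthogonal_matrix_def by simp
    have "(V ** D ** transpose V) *v \<tau> = V *v (D *v ((transpose V ** V) *v v))"
      unfolding \<tau>_def by (simp only: matrix_vector_mul_assoc matrix_mul_assoc)
    also have "\<dots> = V *v (D *v v)" by (simp add: tv)
    finally have "\<tau> \<bullet> ((V ** D ** transpose V) *v \<tau>) = (V *v v) \<bullet> (V *v (D *v v))" unfolding \<tau>_def by simp
    also have "\<dots> = v \<bullet> (transpose V *v (V *v (D *v v)))"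
      by (rule mat_inner_transpose)
    also have "\<dots> = v \<bullet> ((transpose V ** V) *v (D *v v))"
      by (rule arg_cong[where f="\<lambda>z. v \<bullet> z"], rule matrix_vector_mul_assoc)
    also have "\<dots> = v \<bullet> (D *v v)" by (simp add: tv)
    also have "\<dots> = (\<Sum>j\<in>UNIV. v $ j * (lam j * v $ j))"
      unfolding inner_vec_def D_def matrix_vector_mult_def
      by (simp add: inner_real_def if_distrib if_distribR sum.delta cong: if_cong)
    also have "\<dots> = (\<Sum>j\<in>UNIV. w $ j * w $ j)"
    proof (rule sum.cong)
      fix j :: 'd
      have "sqrt (lam j) * sqrt (lam j) = lam j" using lp[of j] by simp
      then show "v $ j * (lam j * v $ j) = w $ j * w $ j"
        unfolding v_def using lp[of j] by (simp add: field_simps)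
    qed simp
    also have "\<dots> = w \<bullet> w" unfolding inner_vec_def by (simp add: inner_real_def)
    finally show ?thesis .
  qed
  finally show ?thesis .
qed

definition Zc :: "('d \<Rightarrow> real) \<Rightarrow> real^'d^'d \<Rightarrow> real^'d \<Rightarrow> real^'d \<Rightarrow> 'd \<Rightarrow> real" where
  "Zc lam V \<mu> x j = ((transpose V *v x) $ j - (transpose V *v \<mu>) $ j) / sqrt (lam j)"

lemma lin_char_Zc:
  fixes X :: "'a \<Rightarrow> real^'d" and V :: "real^'d^'d" and lam :: "'d \<Rightarrow> real" and \<mu> :: "real^'d"
    and \<phi> :: "real \<Rightarrow> complex" and w :: "real^'d"
  assumes M: "prob_space M"
    and ell: "elliptical M X \<mu> (V ** (\<chi> i j. if i = j then lam i else 0) ** transpose V) \<phi>"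
    and oV: "orthogonal_matrix V" and lp: "\<And>i. lam i > 0"
  shows "(\<integral>\<omega>. iexp (\<Sum>j\<in>UNIV. w $ j * Zc lam V \<mu> (X \<omega>) j) \<partial>M) = \<phi> (w \<bullet> w)"
proof -
  have "w \<bullet> (\<chi> j. ((transpose V *v X \<omega>) $ j - (transpose V *v \<mu>) $ j) / sqrt (lam j)) = (\<Sum>j\<in>UNIV. w $ j * Zc lam V \<mu> (X \<omega>) j)" for \<omega>
    unfolding inner_vec_def Zc_def by (simp add: inner_real_def)
  then show ?thesis using lin_char[OF M ell oV lp, of w] by simp
qed

lemma pair_char_Zc:
  fixes X :: "'a \<Rightarrow> real^'d" and V :: "real^'d^'d" and lam :: "'d \<Rightarrow> real" and \<mu> :: "real^'d"
    and \<phi> :: "real \<Rightarrow> complex"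
  assumes M: "prob_space M"
    and ell: "elliptical M X \<mu> (V ** (\<chi> i j. if i = j then lam i else 0) ** transpose V) \<phi>"
    and oV: "orthogonal_matrix V" and lp: "\<And>i. lam i > 0" and ik: "i \<noteq> k"
  shows "(\<integral>\<omega>. iexp (s * Zc lam V \<mu> (X \<omega>) i + t * Zc lam V \<mu> (X \<omega>) k) \<partial>M) = \<phi> (s^2 + t^2)"
proof -
  define w :: "real^'d" where "w = (\<chi> j. if j = i then s else if j = k then t else 0)"
  have s1: "(\<Sum>j\<in>UNIV. w $ j * Zc lam V \<mu> (X \<omega>) j) = s * Zc lam V \<mu> (X \<omega>) i + t * Zc lam V \<mu> (X \<omega>) k" for \<omega>
  proof -
    have "(\<Sum>j\<in>UNIV. w $ j * Zc lam V \<mu> (X \<omega>) j) = (\<Sum>j\<in>UNIV. (if j = i then s * Zc lam V \<mu> (X \<omega>) i else 0) + (if j = k then t * Zc lam V \<mu> (X \<omega>) k else 0))"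
      by (rule sum.cong) (use ik in \<open>auto simp: w_def\<close>)
    then show ?thesis by (simp add: sum.distrib)
  qed
  have s2: "w \<bullet> w = s^2 + t^2"
  proof -
    have "w \<bullet> w = (\<Sum>j\<in>UNIV. (if j = i then s^2 else 0) + (if j = k then t^2 else 0))"
      unfolding inner_vec_def by (rule sum.cong) (use ik in \<open>auto simp: w_def inner_real_def power2_eq_square\<close>)
    then show ?thesis by (simp add: sum.distrib)
  qed
  show ?thesis using lin_char_Zc[OF M ell oV lp, of w] unfolding s1 s2 .
qed

lemma single_char_Zc:
  fixes X :: "'a \<Rightarrow> real^'d" and V :: "real^'d^'d" and lam :: "'d \<Rightarrow> real" and \<mu> :: "real^'d"
    and \<phi> :: "real \<Rightarrow> complex"
  assumes M: "prob_space M"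
    and ell: "elliptical M X \<mu> (V ** (\<chi> i j. if i = j then lam i else 0) ** transpose V) \<phi>"
    and oV: "orthogonal_matrix V" and lp: "\<And>i. lam i > 0"
  shows "(\<integral>\<omega>. iexp (c * Zc lam V \<mu> (X \<omega>) i) \<partial>M) = \<phi> (c^2)"
proof -
  define w :: "real^'d" where "w = (\<chi> j. if j = i then c else 0)"
  have s1: "(\<Sum>j\<in>UNIV. w $ j * Zc lam V \<mu> (X \<omega>) j) = c * Zc lam V \<mu> (X \<omega>) i" for \<omega>
  proof -
    have "(\<Sum>j\<in>UNIV. w $ j * Zc lam V \<mu> (X \<omega>) j) = (\<Sum>j\<in>UNIV. if j = i then c * Zc lam V \<mu> (X \<omega>) i else 0)"
      by (rule sum.cong) (auto simp: w_def)
    then show ?thesis by simp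
  qed
  have s2: "w \<bullet> w = c^2"
  proof -
    have "w \<bullet> w = (\<Sum>j\<in>UNIV. if j = i then c^2 else 0)"
      unfolding inner_vec_def by (rule sum.cong) (auto simp: w_def inner_real_def power2_eq_square)
    then show ?thesis by simp
  qed
  show ?thesis using lin_char_Zc[OF M ell oV lp, of w] unfolding s1 s2 .
qed

lemma sq_add_int:
  fixes f g :: "'a \<Rightarrow> real"
  assumes [measurable]: "f \<in> borel_measurable M" "g \<in> borel_measurable M"
    and "integrable M (\<lambda>\<omega>. (f \<omega>)^2)" "integrable M (\<lambda>\<omega>. (g \<omega>)^2)"
  shows "integrable M (\<lambda>\<omega>. (f \<omega> + g \<omega>)^2)"
proof (rule Bochner_Integration.integrable_bound)
  show "integrable M (\<lambda>\<omega>. 2 * (f \<omega>)^2 + 2 * (g \<omega>)^2)" using assms by simp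
  show "(\<lambda>\<omega>. (f \<omega> + g \<omega>)^2) \<in> borel_measurable M" by measurable
  show "AE \<omega> in M. norm ((f \<omega> + g \<omega>)^2) \<le> norm (2 * (f \<omega>)^2 + 2 * (g \<omega>)^2)"
  proof (intro AE_I2)
    fix \<omega>
    have "(f \<omega> + g \<omega>)^2 \<le> 2 * (f \<omega>)^2 + 2 * (g \<omega>)^2"
      using zero_le_power2[of "f \<omega> - g \<omega>"] by (simp add: power2_eq_square algebra_simps)
    then show "norm ((f \<omega> + g \<omega>)^2) \<le> norm (2 * (f \<omega>)^2 + 2 * (g \<omega>)^2)" by simp
  qed
qed

lemma vec_nth_meas[measurable]:
  fixes X :: "'a \<Rightarrow> real^'d"
  assumes "X \<in> borel_measurable M"
  shows "(\<lambda>\<omega>. X \<omega> $ j) \<in> borel_measurable M"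
proof -
  have c: "(\<lambda>x::real^'d. x $ j) \<in> borel_measurable borel"
    by (intro borel_measurable_continuous_onI) (auto intro!: continuous_intros)
  show ?thesis using measurable_compose[OF assms c] by simp
qed

lemma sq_sum_int:
  fixes X :: "'a \<Rightarrow> real^'d"
  assumes [measurable]: "X \<in> borel_measurable M" and sq: "\<And>j. integrable M (\<lambda>\<omega>. (X \<omega> $ j)^2)"
  shows "integrable M (\<lambda>\<omega>. (\<Sum>l\<in>S. a l * X \<omega> $ l)^2)"
proof (induction S rule: infinite_finite_induct)
  case (infinite A) then show ?case by simp
next
  case empty then show ?case by simp
next
  case (insert x F)
  have "integrable M (\<lambda>\<omega>. (a x * X \<omega> $ x + (\<Sum>l\<in>F. a l * X \<omega> $ l))^2)"
  proof (rule sq_add_int)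
    show "integrable M (\<lambda>\<omega>. (a x * X \<omega> $ x)^2)" using sq[of x] by (simp add: power_mult_distrib)
    show "(\<lambda>\<omega>. a x * X \<omega> $ x) \<in> borel_measurable M" by measurable
    show "(\<lambda>\<omega>. \<Sum>l\<in>F. a l * X \<omega> $ l) \<in> borel_measurable M" by measurable
    show "integrable M (\<lambda>\<omega>. (\<Sum>l\<in>F. a l * X \<omega> $ l)^2)" by (rule insert.IH)
  qed
  then show ?case using insert by simp
qed

lemma Zc_meas[measurable]:
  fixes X :: "'a \<Rightarrow> real^'d"
  assumes [measurable]: "X \<in> borel_measurable M"
  shows "(\<lambda>\<omega>. Zc lam V \<mu> (X \<omega>) k) \<in> borel_measurable M"
proof -
  have c: "(\<lambda>x. Zc lam V \<mu> x k) \<in> borel_measurable borel"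
    unfolding Zc_def matrix_vector_mul_component divide_inverse
    by (intro borel_measurable_continuous_onI) (auto intro!: continuous_intros)
  show ?thesis using measurable_compose[OF assms c] by simp
qed

lemma Zc_sq_int:
  fixes X :: "'a \<Rightarrow> real^'d"
  assumes M: "prob_space M" and [measurable]: "X \<in> borel_measurable M" and sq: "\<And>j. integrable M (\<lambda>\<omega>. (X \<omega> $ j)^2)"
  shows "integrable M (\<lambda>\<omega>. (Zc lam V \<mu> (X \<omega>) k)^2)"
proof -
  interpret prob_space M by fact
  define A where "A = transpose V"
  have e: "Zc lam V \<mu> (X \<omega>) k = (\<Sum>l\<in>UNIV. (A $ k $ l / sqrt (lam k)) * X \<omega> $ l) + (- (A *v \<mu>) $ k / sqrt (lam k))" for \<omega>
    unfolding Zc_def A_def[symmetric] matrix_vector_mult_def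
    by (simp add: diff_divide_distrib sum_divide_distrib)
  have m1: "(\<lambda>\<omega>. \<Sum>l\<in>UNIV. (A $ k $ l / sqrt (lam k)) * X \<omega> $ l) \<in> borel_measurable M" by measurable
  have i1: "integrable M (\<lambda>\<omega>. (\<Sum>l\<in>UNIV. (A $ k $ l / sqrt (lam k)) * X \<omega> $ l)^2)"
    by (rule sq_sum_int[OF assms(2) sq])
  have "integrable M (\<lambda>\<omega>. ((\<Sum>l\<in>UNIV. (A $ k $ l / sqrt (lam k)) * X \<omega> $ l) + (- (A *v \<mu>) $ k / sqrt (lam k)))^2)"
    by (rule sq_add_int[OF m1 _ i1]) simp_all
  then show ?thesis unfolding e .
qed

lemma Inf_affine:
  fixes S :: "real set"
  assumes "S \<noteq> {}" "bdd_below S" "s > 0"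
  shows "Inf ((\<lambda>y. c + s * y) ` S) = c + s * Inf S"
proof (rule antisym)
  obtain b where b: "\<And>x. x \<in> S \<Longrightarrow> b \<le> x" using assms(2) unfolding bdd_below_def by auto
  have bb: "bdd_below ((\<lambda>y. c + s * y) ` S)"
    unfolding bdd_below_def using b assms(3) by (auto intro!: exI[of _ "c + s * b"])
  have "(Inf ((\<lambda>y. c + s * y) ` S) - c) / s \<le> Inf S"
  proof (rule cInf_greatest[OF assms(1)])
    fix x assume "x \<in> S"
    then have "Inf ((\<lambda>y. c + s * y) ` S) \<le> c + s * x" by (intro cInf_lower bb) auto
    then show "(Inf ((\<lambda>y. c + s * y) ` S) - c) / s \<le> x" using assms(3) by (simp add: field_simps)
  qed
  then show "Inf ((\<lambda>y. c + s * y) ` S) \<le> c + s * Inf S" using assms(3) by (simp add: field_simps)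
  show "c + s * Inf S \<le> Inf ((\<lambda>y. c + s * y) ` S)"
  proof (rule cInf_greatest)
    show "(\<lambda>y. c + s * y) ` S \<noteq> {}" using assms(1) by simp
    fix x assume "x \<in> (\<lambda>y. c + s * y) ` S"
    then obtain y where y: "y \<in> S" "x = c + s * y" by auto
    have "Inf S \<le> y" by (rule cInf_lower[OF y(1) assms(2)])
    then show "c + s * Inf S \<le> x" using y assms(3) by (simp add: mult_left_mono)
  qed
qed

lemma quantile_set_props:
  fixes Z :: "'a \<Rightarrow> real"
  assumes M: "prob_space M" and [measurable]: "Z \<in> borel_measurable M" and p: "0 < p" "p < 1"
  shows "{x. p \<le> measure M {\<omega> \<in> space M. Z \<omega> \<le> x}} \<noteq> {}"
    and "bdd_below {x. p \<le> measure M {\<omega> \<in> space M. Z \<omega> \<le> x}}"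
proof -
  interpret prob_space M by fact
  interpret R: real_distribution "distr M borel Z" by simp
  have F: "cdf (distr M borel Z) x = measure M {\<omega> \<in> space M. Z \<omega> \<le> x}" for x
    unfolding cdf_def by (subst measure_distr) (auto intro!: arg_cong[where f="measure M"])
  have "eventually (\<lambda>x. p < cdf (distr M borel Z) x) at_top"
    by (rule order_tendstoD(1)[OF R.cdf_lim_at_top_prob p(2)])
  then obtain N where "\<And>x. x \<ge> N \<Longrightarrow> p < cdf (distr M borel Z) x" by (auto simp: eventually_at_top_linorder)
  then have "N \<in> {x. p \<le> measure M {\<omega> \<in> space M. Z \<omega> \<le> x}}" using F by (auto intro: less_imp_le)
  then show "{x. p \<le> measure M {\<omega> \<in> space M. Z \<omega> \<le> x}} \<noteq> {}" by blast
  have "eventually (\<lambda>x. cdf (distr M borel Z) x < p) at_bot"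
    by (rule order_tendstoD(2)[OF R.cdf_lim_at_bot p(1)])
  then obtain N where N: "\<And>x. x \<le> N \<Longrightarrow> cdf (distr M borel Z) x < p" by (auto simp: eventually_at_bot_linorder)
  show "bdd_below {x. p \<le> measure M {\<omega> \<in> space M. Z \<omega> \<le> x}}"
    unfolding bdd_below_def
  proof (intro exI ballI)
    fix x assume "x \<in> {x. p \<le> measure M {\<omega> \<in> space M. Z \<omega> \<le> x}}"
    then have "\<not> cdf (distr M borel Z) x < p" using F by auto
    then show "N \<le> x" using N by (meson linear)
  qed
qed

lemma quantile_affine:
  fixes Z :: "'a \<Rightarrow> real"
  assumes M: "prob_space M" and [measurable]: "Z \<in> borel_measurable M" and p: "0 < p" "p < 1" and s: "s > 0"
  shows "quantile M (\<lambda>\<omega>. c + s * Z \<omega>) p = c + s * quantile M Z p"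
proof -
  have e: "{x. p \<le> measure M {\<omega> \<in> space M. c + s * Z \<omega> \<le> x}} = (\<lambda>y. c + s * y) ` {x. p \<le> measure M {\<omega> \<in> space M. Z \<omega> \<le> x}}"
  proof -
    have m: "measure M {\<omega> \<in> space M. c + s * Z \<omega> \<le> x} = measure M {\<omega> \<in> space M. Z \<omega> \<le> (x - c) / s}" for x
    proof -
      have "{\<omega> \<in> space M. c + s * Z \<omega> \<le> x} = {\<omega> \<in> space M. Z \<omega> \<le> (x - c) / s}"
        using s by (auto simp: pos_le_divide_eq algebra_simps)
      then show ?thesis by simp
    qed
    show ?thesis
    proof (rule set_eqI)
      fix x
      have "x = c + s * ((x - c) / s)" using s by simp
      then show "x \<in> {x. p \<le> measure M {\<omega> \<in> space M. c + s * Z \<omega> \<le> x}} \<longleftrightarrow> x \<in> (\<lambda>y. c + s * y) ` {x. p \<le> measure M {\<omega> \<in> space M. Z \<omega> \<le> x}}"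
        unfolding m using s by (auto intro!: image_eqI[of _ _ "(x - c) / s"])
    qed
  qed
  show ?thesis unfolding quantile_def e
    by (rule Inf_affine[OF quantile_set_props[OF M _ p] s]) simp_all
qed

lemma law_from_char:
  fixes Z Z' :: "'a \<Rightarrow> real"
  assumes M: "prob_space M" and mZ[measurable]: "Z \<in> borel_measurable M" and mZ'[measurable]: "Z' \<in> borel_measurable M"
    and ch: "\<And>s t. (\<integral>\<omega>. iexp (s * Z \<omega> + t * Z \<omega>) \<partial>M) = (\<integral>\<omega>. iexp (s * Z' \<omega> + t * Z' \<omega>) \<partial>M)"
    and S[measurable]: "S \<in> sets borel"
  shows "measure M {\<omega> \<in> space M. Z \<omega> \<in> S} = measure M {\<omega> \<in> space M. Z' \<omega> \<in> S}"
proof -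
  have e: "(\<integral>\<omega>. indicator S (Z \<omega>) * (\<lambda>_. 1::real) (Z \<omega>) \<partial>M) = (\<integral>\<omega>. indicator S (Z' \<omega>) * (\<lambda>_. 1::real) (Z' \<omega>) \<partial>M)"
    by (rule pair_int[OF M M mZ mZ mZ' mZ' ch S]) simp
  have i: "(\<integral>\<omega>. indicator S (W \<omega>) * (\<lambda>_. 1::real) (W \<omega>) \<partial>M) = measure M {\<omega> \<in> space M. W \<omega> \<in> S}" for W :: "'a \<Rightarrow> real"
  proof -
    have "(\<lambda>\<omega>. indicator S (W \<omega>) * (\<lambda>_. 1::real) (W \<omega>)) = indicator (W -` S)"
      by (auto simp: fun_eq_iff split: split_indicator)
    then show ?thesis by (simp add: Int_def conj_commute)
  qed
  show ?thesis using e unfolding i .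
qed

lemma quantile_sym:
  fixes Z :: "'a \<Rightarrow> real"
  assumes M: "prob_space M" and mZ[measurable]: "Z \<in> borel_measurable M"
    and sym: "\<And>S. S \<in> sets borel \<Longrightarrow> measure M {\<omega> \<in> space M. Z \<omega> \<in> S} = measure M {\<omega> \<in> space M. - Z \<omega> \<in> S}"
    and p: "0 < p" "p < 1/2"
  shows "quantile M Z p \<le> 0" and "0 \<le> quantile M Z (1 - p)"
proof -
  interpret prob_space M by fact
  have tot: "measure M {\<omega> \<in> space M. Z \<omega> < 0} + measure M {\<omega> \<in> space M. 0 \<le> Z \<omega>} = 1"
  proof -
    have "measure M ({\<omega> \<in> space M. Z \<omega> < 0} \<union> {\<omega> \<in> space M. 0 \<le> Z \<omega>}) = measure M {\<omega> \<in> space M. Z \<omega> < 0} + measure M {\<omega> \<in> space M. 0 \<le> Z \<omega>}"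
      by (rule finite_measure_Union) auto
    moreover have "{\<omega> \<in> space M. Z \<omega> < 0} \<union> {\<omega> \<in> space M. 0 \<le> Z \<omega>} = space M" by auto
    ultimately show ?thesis using prob_space by simp
  qed
  have s1: "measure M {\<omega> \<in> space M. 0 \<le> Z \<omega>} = measure M {\<omega> \<in> space M. Z \<omega> \<le> 0}"
  proof -
    have "measure M {\<omega> \<in> space M. Z \<omega> \<in> {..0}} = measure M {\<omega> \<in> space M. - Z \<omega> \<in> {..0}}" by (rule sym) simp
    then show ?thesis by simp
  qed
  have s2: "measure M {\<omega> \<in> space M. Z \<omega> < 0} = measure M {\<omega> \<in> space M. 0 < Z \<omega>}"
  proof -
    have "measure M {\<omega> \<in> space M. Z \<omega> \<in> {..<0}} = measure M {\<omega> \<in> space M. - Z \<omega> \<in> {..<0}}" by (rule sym) simp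
    then show ?thesis by simp
  qed
  have m1: "measure M {\<omega> \<in> space M. Z \<omega> < 0} \<le> measure M {\<omega> \<in> space M. Z \<omega> \<le> 0}"
    by (rule finite_measure_mono) auto
  have m2: "measure M {\<omega> \<in> space M. 0 < Z \<omega>} \<le> measure M {\<omega> \<in> space M. 0 \<le> Z \<omega>}"
    by (rule finite_measure_mono) auto
  have half: "1/2 \<le> measure M {\<omega> \<in> space M. Z \<omega> \<le> 0}" using tot s1 m1 by linarith
  have half2: "measure M {\<omega> \<in> space M. Z \<omega> < 0} \<le> 1/2" using tot s2 m2 by linarith
  have p1: "0 < p" "p < 1" using p by auto
  show "quantile M Z p \<le> 0" unfolding quantile_def
  proof (rule cInf_lower)
    show "0 \<in> {x. p \<le> measure M {\<omega> \<in> space M. Z \<omega> \<le> x}}" using half p by simp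
    show "bdd_below {x. p \<le> measure M {\<omega> \<in> space M. Z \<omega> \<le> x}}" by (rule quantile_set_props(2)[OF M mZ p1])
  qed
  have p2: "0 < 1 - p" "1 - p < 1" using p by auto
  show "0 \<le> quantile M Z (1 - p)" unfolding quantile_def
  proof (rule cInf_greatest)
    show "{x. 1 - p \<le> measure M {\<omega> \<in> space M. Z \<omega> \<le> x}} \<noteq> {}" by (rule quantile_set_props(1)[OF M mZ p2])
    fix x assume x: "x \<in> {x. 1 - p \<le> measure M {\<omega> \<in> space M. Z \<omega> \<le> x}}"
    show "0 \<le> x"
    proof (rule ccontr)
      assume "\<not> 0 \<le> x"
      then have "measure M {\<omega> \<in> space M. Z \<omega> \<le> x} \<le> measure M {\<omega> \<in> space M. Z \<omega> < 0}"
        by (intro finite_measure_mono) auto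
      then show False using x half2 p by simp
    qed
  qed
qed

lemma cond_var_formula:
  fixes Zi Zk Yk :: "'a \<Rightarrow> real" and I :: "real set"
  assumes M: "prob_space M" and [measurable]: "Zi \<in> borel_measurable M" "Zk \<in> borel_measurable M"
    and I[measurable]: "I \<in> sets borel"
    and sqk: "integrable M (\<lambda>\<omega>. (Zk \<omega>)^2)"
    and A: "A = {\<omega> \<in> space M. Zi \<omega> \<in> I}"
    and P: "measure M A > 0"
    and Y: "\<And>\<omega>. Yk \<omega> = c + s * Zk \<omega>"
  shows "cond_mean M A (\<lambda>\<omega>. (Yk \<omega> - cond_mean M A Yk) * (Yk \<omega> - cond_mean M A Yk))
       = s^2 * ((\<integral>\<omega>. indicator I (Zi \<omega>) * (Zk \<omega>)^2 \<partial>M) / measure M A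
                - ((\<integral>\<omega>. indicator I (Zi \<omega>) * Zk \<omega> \<partial>M) / measure M A)^2)"
proof -
  interpret prob_space M by fact
  define p where "p = measure M A"
  define q1 where "q1 = (\<integral>\<omega>. indicator I (Zi \<omega>) * Zk \<omega> \<partial>M)"
  define q2 where "q2 = (\<integral>\<omega>. indicator I (Zi \<omega>) * (Zk \<omega>)^2 \<partial>M)"
  have p0: "p > 0" using P p_def by simp
  have indA: "indicator A \<omega> = (indicator I (Zi \<omega>) :: real)" if "\<omega> \<in> space M" for \<omega>
    using that A by (auto split: split_indicator)
  have ik: "integrable M Zk" by (rule square_integrable_imp_integrable[OF _ sqk]) simp
  have i0: "integrable M (\<lambda>\<omega>. indicator I (Zi \<omega>) :: real)"
    by (rule integrable_const_bound[where B=1]) (auto split: split_indicator)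
  have i1: "integrable M (\<lambda>\<omega>. indicator I (Zi \<omega>) * Zk \<omega>)"
    by (rule Bochner_Integration.integrable_bound[OF ik]) (auto split: split_indicator)
  have i2: "integrable M (\<lambda>\<omega>. indicator I (Zi \<omega>) * (Zk \<omega>)^2)"
    by (rule Bochner_Integration.integrable_bound[OF sqk]) (auto split: split_indicator)
  have pint: "(\<integral>\<omega>. indicator I (Zi \<omega>) \<partial>M) = p"
  proof -
    have "(\<integral>\<omega>. indicator I (Zi \<omega>) \<partial>M) = (\<integral>\<omega>. indicator A \<omega> \<partial>M)"
      by (rule Bochner_Integration.integral_cong) (simp, unfold A, auto split: split_indicator)
    also have "\<dots> = p" unfolding p_def A by (simp add: Int_absorb2)
    finally show ?thesis .
  qed
  have cm: "cond_mean M A f = (\<integral>\<omega>. indicator I (Zi \<omega>) * f \<omega> \<partial>M) / p" for f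
    unfolding cond_mean_def p_def[symmetric]
    by (rule arg_cong[where f="\<lambda>x. x / p"], rule Bochner_Integration.integral_cong) (auto simp: indA)
  have m: "cond_mean M A Yk = c + s * (q1 / p)"
  proof -
    have "(\<integral>\<omega>. indicator I (Zi \<omega>) * Yk \<omega> \<partial>M) = (\<integral>\<omega>. c * indicator I (Zi \<omega>) + s * (indicator I (Zi \<omega>) * Zk \<omega>) \<partial>M)"
      unfolding Y by (simp add: algebra_simps)
    also have "\<dots> = c * p + s * q1" using i0 i1 by (simp add: pint q1_def)
    finally show ?thesis unfolding cm using p0 by (simp add: field_simps)
  qed
  define e where "e = q1 / p"
  have "(\<integral>\<omega>. indicator I (Zi \<omega>) * ((Yk \<omega> - cond_mean M A Yk) * (Yk \<omega> - cond_mean M A Yk)) \<partial>M)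
      = (\<integral>\<omega>. s^2 * (indicator I (Zi \<omega>) * (Zk \<omega>)^2) - (2 * s^2 * e) * (indicator I (Zi \<omega>) * Zk \<omega>) + (s^2 * e^2) * indicator I (Zi \<omega>) \<partial>M)"
    unfolding m Y e_def by (rule Bochner_Integration.integral_cong) (auto simp: power2_eq_square algebra_simps)
  also have "\<dots> = s^2 * q2 - (2 * s^2 * e) * q1 + (s^2 * e^2) * p"
    using i0 i1 i2 by (simp add: pint q1_def q2_def)
  finally have X: "(\<integral>\<omega>. indicator I (Zi \<omega>) * ((Yk \<omega> - cond_mean M A Yk) * (Yk \<omega> - cond_mean M A Yk)) \<partial>M)
      = s^2 * q2 - (2 * s^2 * e) * q1 + (s^2 * e^2) * p" .
  have "cond_mean M A (\<lambda>\<omega>. (Yk \<omega> - cond_mean M A Yk) * (Yk \<omega> - cond_mean M A Yk))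
      = (s^2 * q2 - (2 * s^2 * e) * q1 + (s^2 * e^2) * p) / p" by (subst cm) (simp only: X)
  also have "\<dots> = s^2 * (q2 / p - e^2)" unfolding e_def using p0 by (simp add: field_simps power2_eq_square)
  finally show ?thesis unfolding e_def p_def q1_def q2_def .
qed

lemma trace_formula:
  fixes lam :: "'d::finite \<Rightarrow> real"
  shows "(\<Sum>k\<in>UNIV. lam k * (if k = i then b else a)) = a * (\<Sum>k\<in>UNIV. lam k) + lam i * (b - a)"
proof -
  have "(\<Sum>k\<in>UNIV. lam k * (if k = i then b else a)) = (\<Sum>k\<in>UNIV. a * lam k + (if k = i then lam k * (b - a) else 0))"
    by (rule sum.cong) (auto simp: algebra_simps)
  also have "\<dots> = a * (\<Sum>k\<in>UNIV. lam k) + lam i * (b - a)"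
    by (simp add: sum.distrib sum_distrib_left)
  finally show ?thesis .
qed

theorem theorem6:
  fixes M :: "'a measure" and X :: "'a \<Rightarrow> real^('d::{finite,linorder})"
    and \<Sigma> V :: "real^('d::{finite,linorder})^('d::{finite,linorder})" and lam :: "('d::{finite,linorder}) \<Rightarrow> real" and \<alpha> :: real
  assumes "prob_space M"
    and "X \<in> borel_measurable M"
    and "\<And>j. integrable M (\<lambda>\<omega>. (X \<omega> $ j)^2)"
    and "\<Sigma> = cov_matrix M X"
    and "\<exists>\<mu> \<phi>. elliptical M X \<mu> \<Sigma> \<phi>"
    and "\<And>x. x \<noteq> 0 \<Longrightarrow> x \<bullet> (\<Sigma> *v x) > 0"
    and "orthogonal_matrix V"
    and "\<Sigma> = V ** (\<chi> i j. if i = j then lam i else 0) ** transpose V"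
    and "\<And>i j. i \<le> j \<Longrightarrow> lam j \<le> lam i"
    and "\<And>i. lam i > 0"
    and "0 < \<alpha>" and "\<alpha> < 1"
    and "\<And>i. measure M {\<omega> \<in> space M. (transpose V *v X \<omega>) $ i
                 \<in> central_interval M (\<lambda>\<omega>. (transpose V *v X \<omega>) $ i) \<alpha>} > 0"
  shows "\<forall>i. trace (cond_cov M {\<omega> \<in> space M. (transpose V *v X \<omega>) $ Min UNIV
                 \<in> central_interval M (\<lambda>\<omega>. (transpose V *v X \<omega>) $ Min UNIV) \<alpha>}
                 (\<lambda>\<omega>. transpose V *v X \<omega>))
            \<le> trace (cond_cov M {\<omega> \<in> space M. (transpose V *v X \<omega>) $ i
                 \<in> central_interval M (\<lambda>\<omega>. (transpose V *v X \<omega>) $ i) \<alpha>}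
                 (\<lambda>\<omega>. transpose V *v X \<omega>))
         \<and> trace (cond_cov M {\<omega> \<in> space M. (transpose V *v X \<omega>) $ i
                 \<in> central_interval M (\<lambda>\<omega>. (transpose V *v X \<omega>) $ i) \<alpha>}
                 (\<lambda>\<omega>. transpose V *v X \<omega>))
            \<le> trace (cond_cov M {\<omega> \<in> space M. (transpose V *v X \<omega>) $ Max UNIV
                 \<in> central_interval M (\<lambda>\<omega>. (transpose V *v X \<omega>) $ Max UNIV) \<alpha>}
                 (\<lambda>\<omega>. transpose V *v X \<omega>))"
proof -
  interpret prob_space M by (rule assms(1))
  have M: "prob_space M" by (rule assms(1))
  have mX[measurable]: "X \<in> borel_measurable M" by (rule assms(2))
  obtain \<mu> \<phi> where ell0: "elliptical M X \<mu> \<Sigma> \<phi>" using assms(5) by blast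
  have ell: "elliptical M X \<mu> (V ** (\<chi> i j. if i = j then lam i else 0) ** transpose V) \<phi>"
    using ell0 assms(8) by simp
  have oV: "orthogonal_matrix V" by (rule assms(7))
  have lp: "\<And>i. lam i > 0" by (rule assms(10))
  define Z where "Z k \<omega> = Zc lam V \<mu> (X \<omega>) k" for k \<omega>
  define \<nu> where "\<nu> = transpose V *v \<mu>"
  have mZ[measurable]: "Z k \<in> borel_measurable M" for k
    unfolding Z_def[abs_def] by (rule Zc_meas[OF mX])
  have sqZ: "integrable M (\<lambda>\<omega>. (Z k \<omega>)^2)" for k
    unfolding Z_def by (rule Zc_sq_int[OF M mX assms(3)])
  have Yrep: "(transpose V *v X \<omega>) $ k = \<nu> $ k + sqrt (lam k) * Z k \<omega>" for k \<omega>
    unfolding Z_def Zc_def \<nu>_def using lp[of k] by simp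
  have c1: "(\<integral>\<omega>. iexp (s * Z i \<omega> + t * Z i \<omega>) \<partial>M) = \<phi> ((s + t)^2)" for i s t
  proof -
    have "s * Z i \<omega> + t * Z i \<omega> = (s + t) * Zc lam V \<mu> (X \<omega>) i" for \<omega> by (simp add: Z_def distrib_right)
    then show ?thesis using single_char_Zc[OF M ell oV lp, of "s + t" i] by simp
  qed
  have c1n: "(\<integral>\<omega>. iexp (s * (- Z i \<omega>) + t * (- Z i \<omega>)) \<partial>M) = \<phi> ((s + t)^2)" for i s t
  proof -
    have e: "s * (- Z i \<omega>) + t * (- Z i \<omega>) = (- (s + t)) * Zc lam V \<mu> (X \<omega>) i" for \<omega> by (simp add: Z_def algebra_simps)
    have "(\<integral>\<omega>. iexp (s * (- Z i \<omega>) + t * (- Z i \<omega>)) \<partial>M) = (\<integral>\<omega>. iexp ((- (s + t)) * Zc lam V \<mu> (X \<omega>) i) \<partial>M)"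
      by (simp only: e)
    also have "\<dots> = \<phi> ((- (s + t))^2)" by (rule single_char_Zc[OF M ell oV lp])
    also have "(- (s + t))^2 = (s + t)^2" by (simp add: power2_eq_square algebra_simps)
    finally show ?thesis .
  qed
  have c2: "(\<integral>\<omega>. iexp (s * Z i \<omega> + t * Z k \<omega>) \<partial>M) = \<phi> (s^2 + t^2)" if "i \<noteq> k" for i k s t
    unfolding Z_def by (rule pair_char_Zc[OF M ell oV lp that])
  have c2n: "(\<integral>\<omega>. iexp (s * Z i \<omega> + t * (- Z k \<omega>)) \<partial>M) = \<phi> (s^2 + t^2)" if "i \<noteq> k" for i k s t
    using c2[OF that, of s "-t"] by simp
  define r :: 'd where "r = Min UNIV"
  have law: "measure M {\<omega> \<in> space M. Z i \<omega> \<in> S} = measure M {\<omega> \<in> space M. Z r \<omega> \<in> S}" if "S \<in> sets borel" for i S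
    by (rule law_from_char[OF M mZ mZ _ that]) (simp only: c1)
  have sym: "measure M {\<omega> \<in> space M. Z r \<omega> \<in> S} = measure M {\<omega> \<in> space M. - Z r \<omega> \<in> S}" if "S \<in> sets borel" for S
    by (rule law_from_char[OF M mZ _ _ that]) (simp_all only: c1 c1n, measurable)
  define q1 where "q1 = quantile M (Z r) (\<alpha>/2)"
  define q2 where "q2 = quantile M (Z r) (1 - \<alpha>/2)"
  have a0: "0 < \<alpha>/2" "\<alpha>/2 < 1/2" using assms(11,12) by auto
  have hq1: "q1 \<le> 0" unfolding q1_def by (rule quantile_sym(1)[OF M mZ sym a0]) simp
  have hq2: "0 \<le> q2" unfolding q2_def by (rule quantile_sym(2)[OF M mZ sym a0]) simp
  have qeq: "quantile M (Z i) p = quantile M (Z r) p" for i p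
  proof -
    have "measure M {\<omega> \<in> space M. Z i \<omega> \<le> x} = measure M {\<omega> \<in> space M. Z r \<omega> \<le> x}" for x
      using law[of "{..x}" i] by simp
    then show ?thesis unfolding quantile_def by simp
  qed
  define Ev where "Ev i = {\<omega> \<in> space M. (transpose V *v X \<omega>) $ i \<in> central_interval M (\<lambda>\<omega>. (transpose V *v X \<omega>) $ i) \<alpha>}" for i
  have Ev: "Ev i = {\<omega> \<in> space M. Z i \<omega> \<in> {q1..q2}}" for i
  proof -
    have f: "(\<lambda>\<omega>. (transpose V *v X \<omega>) $ i) = (\<lambda>\<omega>. \<nu> $ i + sqrt (lam i) * Z i \<omega>)" by (rule ext, rule Yrep)
    have s0: "sqrt (lam i) > 0" using lp[of i] by simp
    have p1: "0 < \<alpha>/2" "\<alpha>/2 < 1" and p2: "0 < 1 - \<alpha>/2" "1 - \<alpha>/2 < 1" using a0 by auto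
    have ci: "central_interval M (\<lambda>\<omega>. (transpose V *v X \<omega>) $ i) \<alpha> = {\<nu> $ i + sqrt (lam i) * q1 .. \<nu> $ i + sqrt (lam i) * q2}"
    proof -
      have "central_interval M (\<lambda>\<omega>. (transpose V *v X \<omega>) $ i) \<alpha> = central_interval M (\<lambda>\<omega>. \<nu> $ i + sqrt (lam i) * Z i \<omega>) \<alpha>"
        by (simp only: f)
      also have "\<dots> = {\<nu> $ i + sqrt (lam i) * quantile M (Z i) (\<alpha>/2) .. \<nu> $ i + sqrt (lam i) * quantile M (Z i) (1 - \<alpha>/2)}"
        unfolding central_interval_def quantile_affine[OF M mZ p1 s0] quantile_affine[OF M mZ p2 s0] ..
      also have "\<dots> = {\<nu> $ i + sqrt (lam i) * q1 .. \<nu> $ i + sqrt (lam i) * q2}"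
        unfolding q1_def q2_def qeq[of i "\<alpha>/2"] qeq[of i "1 - \<alpha>/2"] ..
      finally show ?thesis .
    qed
    show ?thesis unfolding Ev_def ci unfolding Yrep using s0 by auto
  qed
  have Pos: "measure M (Ev i) > 0" for i unfolding Ev_def by (rule assms(13))
  define P where "P = measure M (Ev r)"
  have PP: "measure M (Ev i) = P" for i unfolding P_def Ev by (rule law) simp
  define Q1 where "Q1 i k = (\<integral>\<omega>. indicator {q1..q2} (Z i \<omega>) * Z k \<omega> \<partial>M)" for i k
  define Q2 where "Q2 i k = (\<integral>\<omega>. indicator {q1..q2} (Z i \<omega>) * (Z k \<omega>)^2 \<partial>M)" for i k
  have diag: "(cond_cov M (Ev i) (\<lambda>\<omega>. transpose V *v X \<omega>)) $ k $ k = lam k * (Q2 i k / P - (Q1 i k / P)^2)" for i k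
  proof -
    have "(cond_cov M (Ev i) (\<lambda>\<omega>. transpose V *v X \<omega>)) $ k $ k
        = cond_mean M (Ev i) (\<lambda>\<omega>. ((transpose V *v X \<omega>) $ k - cond_mean M (Ev i) (\<lambda>\<eta>. (transpose V *v X \<eta>) $ k)) *
                                ((transpose V *v X \<omega>) $ k - cond_mean M (Ev i) (\<lambda>\<eta>. (transpose V *v X \<eta>) $ k)))"
      by (simp add: cond_cov_def)
    also have "\<dots> = (sqrt (lam k))^2 * (Q2 i k / measure M (Ev i) - (Q1 i k / measure M (Ev i))^2)"
      unfolding Q1_def Q2_def
      by (rule cond_var_formula[OF M mZ mZ _ sqZ Ev Pos Yrep]) simp
    finally show ?thesis using lp[of k] PP[of i] by simp
  qed
  have tr: "trace (cond_cov M (Ev i) (\<lambda>\<omega>. transpose V *v X \<omega>)) = (\<Sum>k\<in>UNIV. lam k * (Q2 i k / P - (Q1 i k / P)^2))" for i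
    unfolding trace_def diag ..
  have main: "trace (cond_cov M (Ev i) (\<lambda>\<omega>. transpose V *v X \<omega>)) \<le> trace (cond_cov M (Ev j) (\<lambda>\<omega>. transpose V *v X \<omega>))"
    if lij: "lam j \<le> lam i" for i j
  proof (cases "i = j")
    case True then show ?thesis by simp
  next
    case False
    have Q1z: "Q1 i k = 0" if "i \<noteq> k" for i k
    proof -
      have "Q1 i k = (\<integral>\<omega>. indicator {q1..q2} (Z i \<omega>) * (\<lambda>y. y) (- Z k \<omega>) \<partial>M)"
        unfolding Q1_def
      proof (rule pair_int[OF M M mZ mZ mZ, where S="{q1..q2}" and f="\<lambda>y. y"])
        show "(\<lambda>\<omega>. - Z k \<omega>) \<in> borel_measurable M" by measurable
      qed ((simp only: c2[OF that] c2n[OF that])[1], simp_all)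
      also have "\<dots> = - Q1 i k" unfolding Q1_def by simp
      finally show ?thesis by simp
    qed
    have Q2eq: "Q2 i k = Q2 i' k'" if "i \<noteq> k" "i' \<noteq> k'" for i k i' k'
      unfolding Q2_def
      by (rule pair_int[OF M M mZ mZ mZ mZ, where S="{q1..q2}" and f="\<lambda>y. y^2"]) ((simp only: c2[OF that(1)] c2[OF that(2)])[1], simp, measurable)
    have Q2d: "Q2 j j = Q2 i i"
      unfolding Q2_def
      by (rule pair_int[OF M M mZ mZ mZ mZ, where S="{q1..q2}" and f="\<lambda>y. y^2"]) ((simp only: c1)[1], simp, measurable)
    have Q1d: "Q1 j j = Q1 i i"
      unfolding Q1_def
      by (rule pair_int[OF M M mZ mZ mZ mZ, where S="{q1..q2}" and f="\<lambda>y. y"]) ((simp only: c1)[1], simp, measurable)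
    define a where "a = Q2 i j / P"
    define b where "b = Q2 i i / P - (Q1 i i / P)^2"
    have ti: "trace (cond_cov M (Ev i) (\<lambda>\<omega>. transpose V *v X \<omega>)) = (\<Sum>k\<in>UNIV. lam k * (if k = i then b else a))"
      unfolding tr
    proof (rule sum.cong)
      fix k show "lam k * (Q2 i k / P - (Q1 i k / P)^2) = lam k * (if k = i then b else a)"
      proof (cases "k = i")
        case True then show ?thesis by (simp add: b_def)
      next
        case False
        then show ?thesis using Q1z[of i k] Q2eq[of i k i j] \<open>i \<noteq> j\<close> by (simp add: a_def)
      qed
    qed simp
    have tj: "trace (cond_cov M (Ev j) (\<lambda>\<omega>. transpose V *v X \<omega>)) = (\<Sum>k\<in>UNIV. lam k * (if k = j then b else a))"
      unfolding tr
    proof (rule sum.cong)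
      fix k show "lam k * (Q2 j k / P - (Q1 j k / P)^2) = lam k * (if k = j then b else a)"
      proof (cases "k = j")
        case True then show ?thesis by (simp add: b_def Q2d Q1d)
      next
        case False
        then show ?thesis using Q1z[of j k] Q2eq[of j k i j] \<open>i \<noteq> j\<close> by (simp add: a_def)
      qed
    qed simp
    have Q2ij: "Q2 i i \<le> Q2 i j"
      unfolding Q2_def
      by (rule rot_ineq[OF M mZ mZ sqZ sqZ _ hq1 hq2]) (rule c2[OF False])
    have P0: "P > 0" using Pos[of r] P_def by simp
    have ba: "b \<le> a" unfolding a_def b_def using Q2ij P0
      by (smt (verit) divide_right_mono zero_le_power2)
    have "lam i * (b - a) \<le> lam j * (b - a)" by (rule mult_right_mono_neg) (use lij ba in auto)
    then show ?thesis unfolding ti tj trace_formula by linarith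
  qed
  have "\<forall>i. trace (cond_cov M (Ev (Min UNIV)) (\<lambda>\<omega>. transpose V *v X \<omega>)) \<le> trace (cond_cov M (Ev i) (\<lambda>\<omega>. transpose V *v X \<omega>))
         \<and> trace (cond_cov M (Ev i) (\<lambda>\<omega>. transpose V *v X \<omega>)) \<le> trace (cond_cov M (Ev (Max UNIV)) (\<lambda>\<omega>. transpose V *v X \<omega>))"
  proof
    fix i :: 'd
    have "Min UNIV \<le> i" by simp
    then have l1: "lam i \<le> lam (Min UNIV)" by (rule assms(9))
    have "i \<le> Max UNIV" by simp
    then have l2: "lam (Max UNIV) \<le> lam i" by (rule assms(9))
    show "trace (cond_cov M (Ev (Min UNIV)) (\<lambda>\<omega>. transpose V *v X \<omega>)) \<le> trace (cond_cov M (Ev i) (\<lambda>\<omega>. transpose V *v X \<omega>))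
         \<and> trace (cond_cov M (Ev i) (\<lambda>\<omega>. transpose V *v X \<omega>)) \<le> trace (cond_cov M (Ev (Max UNIV)) (\<lambda>\<omega>. transpose V *v X \<omega>))"
      using main[OF l1] main[OF l2] by simp
  qed
  then show ?thesis unfolding Ev_def .
qed

end
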